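(* Let $t\ge0$ be an integer such that $q=4t+5$ is a prime power, let $s=t+1$, let $F_q$ be the field with $q$ elements, $C$ its set of nonzero squares, $V=F_q\times F_q$ and $X=\mathbb{P}(V)$ the projective line (of cardinality $q+1$). For a basis $(u,v)$ of $V$ let $\Gamma^u_v$ be the graph on $X^u=X\setminus\{\langle u\rangle\}$ in which $\langle \alpha u+v\rangle$ and $\langle\beta u+v\rangle$ ($\alpha,\beta\in F_q$) are adjacent iff $\alpha-\beta\in C$. Then for every basis $(u,v)$: 1. $\Gamma^u_v$ has diameter $2$, every vertex has exactly $(q-1)/2=2s$ neighbours, two adjacent vertices have exactly $t=s-1$ common neighbours, and two vertices at distance $2$ have exactly $s$ common neighbours. 2. Let $\widehat\Gamma$ be the graph on $X$ obtained from $\Gamma^u_v$ by adding $\langle u\rangle$ as an isolated vertex. Then the localized graph ${}^{\langle v\rangle}\widehat\Gamma$ has $\langle v\rangle$ isolated and induces $\Gamma^v_u$ on $X\setminus\{\langle v\rangle\}$. 3. (a) For every $\varphi\in GL_2(F_q)$ (acting on $X$ by $\langle w\rangle\mapsto\langle\varphi(w)\rangle$), $\varphi(\Gamma^u_v)=\Gamma^{\varphi(u)}_{\varphi(v)}$. (b) If moreover $\varphi$ stabilizes the line $\langle u\rangle$, then $\Gamma^{\varphi(u)}_{\varphi(v)}=\Gamma^u_v$ if $\det\varphi$ is a square in $F_q$, and otherwise $\Gamma^{\varphi(u)}_{\varphi(v)}$ is the complementary graph of $\Gamma^u_v$ on $X^u$. 4. The group $SL_2(F_q)$ has exactly two orbits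 on the set of graphs $\Gamma^{u'}_{v'}$ ($(u',v')$ ranging over the bases of $V$). The orbit of $\Gamma^u_v$ is the set of graphs obtained by localizing $\widehat\Gamma$ (as in 2) at a point $z\in X$ and deleting the isolated vertex $z$, for $z$ ranging over $X$.
   Context: For a simple graph $\Gamma$ on a finite set $X$, its matrix $\mathcal{E}=(\varepsilon_{i,j})$ has $\varepsilon_{i,j}=-1$ if $i\ne j$ are adjacent, $1$ otherwise. Two graphs on $X$ with matrices $\mathcal{E},\mathcal{E}'$ are associated if there are $\nu_i\in\{\pm1\}$ with $\varepsilon'_{i,j}=\nu_i\nu_j\varepsilon_{i,j}$ for all $i,j$. The localization ${}^z\Gamma$ of $\Gamma$ at $z\in X$ is the unique graph associated to $\Gamma$ in which $z$ is an isolated vertex. The complementary graph has the same vertices, its edges being the non-edges of the original graph. *)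

theory Defs
  imports "HOL-Analysis.Analysis" "HOL-Library.Extended_Nat"
begin

type_synonym 'v graph = "'v set \<times> ('v \<Rightarrow> 'v \<Rightarrow> bool)"

definition simple_graph_on :: "'v set \<Rightarrow> ('v \<Rightarrow> 'v \<Rightarrow> bool) \<Rightarrow> bool" where
  "simple_graph_on V E \<longleftrightarrow> (\<forall>x y. E x y \<longrightarrow> x \<in> V \<and> y \<in> V \<and> x \<noteq> y \<and> E y x)"

definition adj :: "'v graph \<Rightarrow> 'v \<Rightarrow> 'v \<Rightarrow> bool" where
  "adj G x y \<longleftrightarrow> x \<in> fst G \<and> y \<in> fst G \<and> snd G x y"

definition nbrs :: "'v graph \<Rightarrow> 'v \<Rightarrow> 'v set" where
  "nbrs G x = {y \<in> fst G. adj G x y}"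

definition common_nbrs :: "'v graph \<Rightarrow> 'v \<Rightarrow> 'v \<Rightarrow> 'v set" where
  "common_nbrs G x y = {z \<in> fst G. adj G x z \<and> adj G y z}"

definition graph_dist :: "'v graph \<Rightarrow> 'v \<Rightarrow> 'v \<Rightarrow> enat" where
  "graph_dist G x y =
     (if \<exists>n. (adj G ^^ n) x y then enat (LEAST n. (adj G ^^ n) x y) else \<infinity>)"

definition diameter :: "'v graph \<Rightarrow> enat" where
  "diameter G = (SUP x\<in>fst G. SUP y\<in>fst G. graph_dist G x y)"

definition induced :: "'v graph \<Rightarrow> 'v set \<Rightarrow> 'v graph" where
  "induced G W = (W, \<lambda>x y. x \<in> W \<and> y \<in> W \<and> adj G x y)"

definition delete_vertex :: "'v graph \<Rightarrow> 'v \<Rightarrow> 'v graph" where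
  "delete_vertex G z = induced G (fst G - {z})"

definition complement :: "'v graph \<Rightarrow> 'v graph" where
  "complement G = (fst G, \<lambda>x y. x \<in> fst G \<and> y \<in> fst G \<and> x \<noteq> y \<and> \<not> adj G x y)"

definition graph_image :: "('v \<Rightarrow> 'w) \<Rightarrow> 'v graph \<Rightarrow> 'w graph" where
  "graph_image f G = (f ` fst G, \<lambda>P Q. \<exists>x y. P = f x \<and> Q = f y \<and> adj G x y)"

definition eps :: "('v \<Rightarrow> 'v \<Rightarrow> bool) \<Rightarrow> 'v \<Rightarrow> 'v \<Rightarrow> int" where
  "eps E i j = (if i \<noteq> j \<and> E i j then -1 else 1)"

definition associated :: "'v set \<Rightarrow> ('v \<Rightarrow> 'v \<Rightarrow> bool) \<Rightarrow> ('v \<Rightarrow> 'v \<Rightarrow> bool) \<Rightarrow> bool" where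
  "associated V E E' \<longleftrightarrow> (\<exists>\<nu> :: 'v \<Rightarrow> int. (\<forall>i\<in>V. \<nu> i = 1 \<or> \<nu> i = -1) \<and>
      (\<forall>i\<in>V. \<forall>j\<in>V. eps E' i j = \<nu> i * \<nu> j * eps E i j))"

definition localize :: "'v graph \<Rightarrow> 'v \<Rightarrow> 'v graph" where
  "localize G z = (fst G, THE E'. simple_graph_on (fst G) E' \<and> associated (fst G) (adj G) E'
                                  \<and> (\<forall>y. \<not> E' z y))"

definition line :: "'a::field ^ 2 \<Rightarrow> ('a ^ 2) set" where
  "line w = {c *s w | c. True}"

definition projline :: "('a::field ^ 2) set set" where
  "projline = {line w | w. w \<noteq> 0}"

definition is_basis2 :: "'a::field ^ 2 \<Rightarrow> 'a ^ 2 \<Rightarrow> bool" where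
  "is_basis2 u v \<longleftrightarrow> (\<forall>w. \<exists>!ab. w = fst ab *s u + snd ab *s v)"

definition nonzero_squares :: "'a::field set" where
  "nonzero_squares = {c ^ 2 | c. c \<noteq> 0}"

definition Xu :: "'a::field ^ 2 \<Rightarrow> ('a ^ 2) set set" where
  "Xu u = projline - {line u}"

definition GammaAdj :: "'a::field ^ 2 \<Rightarrow> 'a ^ 2 \<Rightarrow> ('a ^ 2) set \<Rightarrow> ('a ^ 2) set \<Rightarrow> bool" where
  "GammaAdj u v P Q \<longleftrightarrow> (\<exists>\<alpha> \<beta>. P = line (\<alpha> *s u + v) \<and> Q = line (\<beta> *s u + v)
                           \<and> \<alpha> - \<beta> \<in> nonzero_squares)"

definition Gamma :: "'a::field ^ 2 \<Rightarrow> 'a ^ 2 \<Rightarrow> ('a ^ 2) set graph" where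
  "Gamma u v = (Xu u, GammaAdj u v)"

definition Gamma_hat :: "'a::field ^ 2 \<Rightarrow> 'a ^ 2 \<Rightarrow> ('a ^ 2) set graph" where
  "Gamma_hat u v = (projline, GammaAdj u v)"

definition proj_act :: "'a::field ^ 2 ^ 2 \<Rightarrow> ('a ^ 2) set \<Rightarrow> ('a ^ 2) set" where
  "proj_act \<phi> P = (\<lambda>w. \<phi> *v w) ` P"

definition GL2 :: "('a::field ^ 2 ^ 2) set" where
  "GL2 = {\<phi>. invertible \<phi>}"

definition SL2 :: "('a::field ^ 2 ^ 2) set" where
  "SL2 = {\<phi>. det \<phi> = 1}"

definition SL2_orbit :: "('a::field ^ 2) set graph \<Rightarrow> ('a ^ 2) set graph set" where
  "SL2_orbit G = {graph_image (proj_act \<phi>) G | \<phi>. \<phi> \<in> SL2}"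

end

theory Submission
  imports Defs
begin


lemma inv_even:
  assumes "finite B" "\<forall>x\<in>B. f x \<in> B \<and> f (f x) = x \<and> f x \<noteq> x"
  shows "even (card B)"
  using assms
proof (induction "card B" arbitrary: B rule: less_induct)
  case less
  show ?case
  proof (cases "B = {}")
    case True then show ?thesis by simp
  next
    case False
    then obtain x where x: "x \<in> B" by blast
    let ?B = "B - {x, f x}"
    have fx: "f x \<in> B" "f x \<noteq> x" using less.prems x by auto
    have c: "card ?B = card B - 2" using x fx less.prems(1) by (simp add: card_Diff_subset)
    have cB: "card B \<ge> 2"
    proof -
      have "{x, f x} \<subseteq> B" using x fx by auto
      then have "card {x, f x} \<le> card B" using less.prems(1) by (intro card_mono)
      then show ?thesis using fx by simp
    qed
    have "even (card ?B)"
    proof (rule less.hyps)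
      show "card ?B < card B" using c cB by simp
      show "finite ?B" using less.prems by simp
      show "\<forall>y\<in>?B. f y \<in> ?B \<and> f (f y) = y \<and> f y \<noteq> y"
        using less.prems(2) x by (metis Diff_iff insertCI insertE singletonD)
    qed
    moreover have "card B = card ?B + 2" using c cB by simp
    ultimately show ?thesis by simp
  qed
qed

lemma two_ne:
  assumes "odd (CARD('a::{field,finite}))"
  shows "(2::'a) \<noteq> 0"
proof
  assume h: "(2::'a) = 0"
  have "even (card (UNIV::'a set))"
  proof (rule inv_even[where f="\<lambda>x. x + 1"])
    show "\<forall>x\<in>(UNIV::'a set). x + 1 \<in> UNIV \<and> x + 1 + 1 = x \<and> x + 1 \<noteq> x"
      using h by (simp add: add.assoc)
  qed simp
  then show False using assms by simp
qed

abbreviation "SQ \<equiv> nonzero_squares"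

lemma sq_mem: "x \<in> nonzero_squares \<longleftrightarrow> (\<exists>c. c \<noteq> 0 \<and> x = c^2)"
  by (auto simp: nonzero_squares_def)

lemma sq_ex: "(c::'a::field) \<in> nonzero_squares \<Longrightarrow> \<exists>r. r \<noteq> 0 \<and> c = r^2"
  by (auto simp: nonzero_squares_def)

lemma sq_nz: "(x::'a::field) \<in> SQ \<Longrightarrow> x \<noteq> 0"
  by (auto simp: sq_mem)

lemma sq_mult: "(x::'a::field) \<in> SQ \<Longrightarrow> y \<in> SQ \<Longrightarrow> x * y \<in> SQ"
  by (auto simp: sq_mem) (metis mult_eq_0_iff power_mult_distrib)

lemma sq_inv: "(x::'a::field) \<in> SQ \<Longrightarrow> inverse x \<in> SQ"
proof -
  assume "x \<in> SQ"
  then obtain c where c: "c \<noteq> 0" "x = c^2" using sq_ex by blast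
  then have "inverse x = (inverse c)^2" by (simp add: power_inverse)
  moreover have "inverse c \<noteq> 0" using c(1) by simp
  ultimately show ?thesis unfolding sq_mem by blast
qed

lemma sq_one: "(1::'a::field) \<in> SQ"
  by (auto simp: sq_mem intro: exI[of _ 1])

lemma sq_sq: "(c::'a::field) \<noteq> 0 \<Longrightarrow> c^2 \<in> SQ"
  by (auto simp: sq_mem)

lemma sq_cancel: "(x::'a::field) \<in> SQ \<Longrightarrow> x * y \<in> SQ \<Longrightarrow> y \<in> SQ"
proof -
  assume a: "x \<in> SQ" "x * y \<in> SQ"
  have eq: "y = inverse x * (x * y)" using sq_nz[OF a(1)] by (simp add: mult.assoc[symmetric])
  have m: "inverse x * (x * y) \<in> SQ" using sq_mult[OF sq_inv[OF a(1)] a(2)] .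
  show ?thesis by (metis m eq)
qed

lemma sq_roots: "(r::'a::field) \<noteq> 0 \<Longrightarrow> c = r^2 \<Longrightarrow> {y::'a. y^2 = c} = {r, -r}"
  by (auto simp: power2_eq_iff)

lemma card_sq:
  assumes "odd (CARD('a::{field,finite}))"
  shows "CARD('a) - 1 = 2 * card (SQ :: 'a set)"
proof -
  have two: "(2::'a) \<noteq> 0" by (rule two_ne[OF assms])
  have U: "(UNIV - {0::'a}) = (\<Union>c\<in>SQ. {y. y^2 = c})"
    by (auto simp: sq_mem)
  have C2: "card {y::'a. y^2 = c} = 2" if cS: "c \<in> SQ" for c
  proof -
    obtain r where r: "r \<noteq> 0" "c = r^2" using sq_ex[OF cS] by blast
    have "{y::'a. y^2 = c} = {r, -r}" using r by (rule sq_roots)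
    moreover have "r \<noteq> -r"
    proof
      assume h: "r = -r"
      have "r + r = r + -r" by (subst (2) h) (rule refl)
      then have "r + r = 0" by simp
      then have "2 * r = 0" by (simp only: mult_2)
      then show False using two r by simp
    qed
    ultimately show ?thesis by simp
  qed
  have "card (UNIV - {0::'a}) = (\<Sum>c\<in>SQ. card {y::'a. y^2 = c})"
    unfolding U by (rule card_UN_disjoint) auto
  also have "\<dots> = (\<Sum>c\<in>(SQ::'a set). 2)" by (rule sum.cong) (auto simp: C2)
  finally show ?thesis by simp
qed

definition NSQ :: "'a::field set" where "NSQ = {x. x \<noteq> 0 \<and> x \<notin> SQ}"

lemma card_nsq:
  assumes "odd (CARD('a::{field,finite}))"
  shows "card (NSQ :: 'a set) = card (SQ :: 'a set)"
proof -
  have "NSQ = (UNIV - {0::'a}) - SQ" by (auto simp: NSQ_def)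
  moreover have "SQ \<subseteq> UNIV - {0::'a}" by (auto dest: sq_nz)
  ultimately have "card (NSQ::'a set) = card (UNIV - {0::'a}) - card (SQ::'a set)"
    by (metis card_Diff_subset finite)
  moreover have "card (UNIV - {0::'a}) = CARD('a) - 1" by (simp add: card_Diff_singleton)
  ultimately have "card (NSQ::'a set) = (CARD('a) - 1) - card (SQ::'a set)" by simp
  then show ?thesis using card_sq[OF assms] by simp
qed

lemma nsq_mult:
  assumes "odd (CARD('a::{field,finite}))" "(n::'a) \<in> NSQ" "m \<in> NSQ"
  shows "n * m \<in> SQ"
proof -
  have nz: "n \<noteq> 0" using assms(2) by (simp add: NSQ_def)
  have sub: "(\<lambda>x. n * x) ` SQ \<subseteq> NSQ"
  proof
    fix y assume "y \<in> (\<lambda>x. n * x) ` SQ"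
    then obtain x where x: "x \<in> SQ" "y = n * x" by auto
    have "y \<noteq> 0" using x nz sq_nz by auto
    moreover have "y \<notin> SQ"
    proof
      assume "y \<in> SQ"
      then have "x * n \<in> SQ" using x by (simp add: mult.commute)
      then have "n \<in> SQ" using sq_cancel[OF x(1)] by blast
      then show False using assms(2) by (simp add: NSQ_def)
    qed
    ultimately show "y \<in> NSQ" by (simp add: NSQ_def)
  qed
  have "card ((\<lambda>x. n * x) ` SQ) = card (SQ::'a set)"
    by (rule card_image) (simp add: inj_on_def nz)
  then have "(\<lambda>x. n * x) ` SQ = NSQ"
    using card_nsq[OF assms(1)] sub by (intro card_subset_eq) auto
  then obtain x where x: "x \<in> SQ" "m = n * x" using assms(3) by force
  have "n * m = n^2 * x" using x by (simp add: power2_eq_square)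
  then show ?thesis using sq_mult[OF sq_sq[OF nz] x(1)] by simp
qed

lemma minus_one_sq:
  assumes q: "CARD('a::{field,finite}) = 4 * t + 5"
  shows "(-1::'a) \<in> SQ"
proof (rule ccontr)
  assume h: "(-1::'a) \<notin> SQ"
  have odd: "odd (CARD('a))" using q by simp
  have cS: "card (SQ::'a set) = 2 * t + 2" using card_sq[OF odd] q by simp
  let ?B = "(SQ::'a set) - {1}"
  have "even (card ?B)"
  proof (rule inv_even[where f=inverse])
    show "finite ?B" by simp
    show "\<forall>x\<in>?B. inverse x \<in> ?B \<and> inverse (inverse x) = x \<and> inverse x \<noteq> x"
    proof
      fix x assume x: "x \<in> ?B"
      have nz: "x \<noteq> 0" using x sq_nz by auto
      have "inverse x \<noteq> 1" using x by (metis DiffE insertI1 inverse_1 inverse_inverse_eq)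
      moreover have "inverse x \<noteq> x"
      proof
        assume "inverse x = x"
        then have "x * x = 1" using nz by (metis right_inverse)
        then have "(x - 1) * (x + 1) = 0" by (simp add: algebra_simps)
        then have "x = 1 \<or> x = -1" by (auto simp: eq_neg_iff_add_eq_0)
        then show False using x h by auto
      qed
      ultimately show "inverse x \<in> ?B \<and> inverse (inverse x) = x \<and> inverse x \<noteq> x"
        using x sq_inv by auto
    qed
  qed
  moreover have "card ?B = card (SQ::'a set) - 1" by (rule card_Diff_singleton) (rule sq_one)
  moreover note cS
  ultimately show False by simp
qed

definition chi :: "'a::field \<Rightarrow> int" where
  "chi x = (if x = 0 then 0 else if x \<in> SQ then 1 else -1)"

lemma chi_0[simp]: "chi 0 = 0" by (simp add: chi_def)
lemma chi_1[simp]: "chi 1 = 1" by (simp add: chi_def sq_one)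
lemma chi_eq0[simp]: "chi x = 0 \<longleftrightarrow> x = 0" by (simp add: chi_def)
lemma chi_vals: "(x::'a::field) \<noteq> 0 \<Longrightarrow> chi x = 1 \<or> chi x = -1" by (simp add: chi_def)
lemma chi_sq: "chi x = 1 \<longleftrightarrow> x \<in> SQ" by (auto simp: chi_def dest: sq_nz)
lemma chi_nsq: "chi x = -1 \<longleftrightarrow> x \<in> NSQ" by (auto simp: chi_def NSQ_def)

context
  fixes t :: nat
  assumes q: "CARD('a::{field,finite}) = 4 * t + 5"
begin

lemma oddq: "odd (CARD('a))" using q by simp

lemma chi_mult: "chi ((x::'a) * y) = chi x * chi y"
proof (cases "x = 0 \<or> y = 0")
  case True then show ?thesis by auto
next
  case False
  then have nz: "x \<noteq> 0" "y \<noteq> 0" by auto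
  show ?thesis
  proof (cases "x \<in> SQ")
    case xs: True
    show ?thesis
    proof (cases "y \<in> SQ")
      case True then show ?thesis using xs sq_mult by (simp add: chi_def nz)
    next
      case False
      have "x * y \<notin> SQ" using sq_cancel[OF xs] False by blast
      then show ?thesis using xs False nz by (simp add: chi_def)
    qed
  next
    case xn: False
    show ?thesis
    proof (cases "y \<in> SQ")
      case True
      have "x * y \<notin> SQ" using sq_cancel[OF True] xn by (metis mult.commute)
      then show ?thesis using xn True nz by (simp add: chi_def)
    next
      case False
      have "x * y \<in> SQ" using nsq_mult[OF oddq] xn False nz by (simp add: NSQ_def)
      then show ?thesis using xn False nz by (simp add: chi_def)
    qed
  qed
qed

lemma chi_m1: "chi (-1::'a) = 1" using minus_one_sq[OF q] by (simp add: chi_def)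

lemma chi_neg: "chi (- (x::'a)) = chi x"
proof -
  have "chi (-x) = chi ((-1) * x)" by simp
  also have "\<dots> = chi x" by (simp only: chi_mult chi_m1 mult_1)
  finally show ?thesis .
qed

lemma chi_inverse: "chi (inverse (x::'a)) = chi x"
proof (cases "x = 0")
  case True then show ?thesis by simp
next
  case False
  have "chi x * chi (inverse x) = 1" using False by (simp flip: chi_mult)
  then show ?thesis using chi_vals[OF False] by auto
qed

lemma chi_divide: "chi ((x::'a) / y) = chi x * chi y"
  by (simp add: divide_inverse chi_mult chi_inverse)

lemma chi_d: "(d::'a) \<noteq> 0 \<Longrightarrow> chi (d * w) = 1 \<longleftrightarrow> chi w = chi d"
  using chi_vals[of d] by (auto simp: chi_mult)

lemma card_chi1: "card {z::'a. chi z = 1} = 2 * t + 2"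
proof -
  have "{z::'a. chi z = 1} = SQ" by (auto simp: chi_sq)
  then show ?thesis using card_sq[OF oddq] q by simp
qed

lemma card_chim1: "card {z::'a. chi z = -1} = 2 * t + 2"
proof -
  have "{z::'a. chi z = -1} = NSQ" by (auto simp: chi_nsq)
  moreover have "{z::'a. chi z = 1} = SQ" by (auto simp: chi_sq)
  ultimately show ?thesis using card_nsq[OF oddq] card_chi1 by simp
qed

lemma paley_counts:
  "card {z::'a. chi z = 1 \<and> chi (z - 1) = 1} = t \<and>
   card {z::'a. chi z = -1 \<and> chi (z - 1) = -1} = t + 1"
proof -
  define AA where "AA = {z::'a. chi z = 1 \<and> chi (z - 1) = 1}"
  define DD where "DD = {z::'a. chi z = -1 \<and> chi (z - 1) = 1}"
  define MM where "MM = {z::'a. chi z = -1 \<and> chi (z - 1) = -1}"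
  have P1: "{z::'a. chi (z - 1) = 1} = (\<lambda>s. s + 1) ` {z. chi z = 1}"
    by (auto simp: image_iff) (metis diff_add_cancel)
  have cP1: "card {z::'a. chi (z - 1) = 1} = 2 * t + 2"
    unfolding P1 by (subst card_image) (auto simp: inj_on_def card_chi1)
  have P1': "{z::'a. chi (z - 1) = 1} = insert 0 (AA \<union> DD)"
  proof -
    have "chi (0 - 1 :: 'a) = 1" using chi_m1 by simp
    moreover have "chi z = 1 \<or> chi z = -1" if "z \<noteq> 0" for z :: 'a using chi_vals[OF that] .
    ultimately show ?thesis unfolding AA_def DD_def by auto
  qed
  have "card (insert 0 (AA \<union> DD)) = 1 + card AA + card DD"
  proof -
    have "0 \<notin> AA \<union> DD" by (simp add: AA_def DD_def)
    moreover have "AA \<inter> DD = {}" by (auto simp: AA_def DD_def)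
    ultimately show ?thesis by (simp add: card_Un_disjoint)
  qed
  then have e1: "1 + card AA + card DD = 2 * t + 2" using cP1 P1' by simp
  have N: "{z::'a. chi z = -1} = DD \<union> MM"
  proof -
    have "chi (z - 1) = 1 \<or> chi (z - 1) = -1" if "chi z = -1" for z :: 'a
    proof -
      have "z \<noteq> 1" using that by auto
      then show ?thesis using chi_vals[of "z - 1"] by simp
    qed
    then show ?thesis unfolding DD_def MM_def by auto
  qed
  have e2: "card DD + card MM = 2 * t + 2"
  proof -
    have "DD \<inter> MM = {}" by (auto simp: DD_def MM_def)
    then show ?thesis using N card_chim1 by (simp add: card_Un_disjoint)
  qed
  have key: "chi (inverse z - 1) = chi (z - 1) * chi z" if False: "z \<noteq> 0" for z :: 'a
  proof -
    have "inverse z - 1 = - (z - 1) / z" using False by (simp add: field_simps)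
    moreover have "chi (- (z - 1)) = chi (z - 1)" by (rule chi_neg)
    ultimately show ?thesis by (simp only: chi_divide)
  qed
  have "card MM \<le> card DD"
  proof (rule card_inj_on_le[where f=inverse])
    show "inj_on inverse MM" by (simp add: inj_on_def)
    show "inverse ` MM \<subseteq> DD"
    proof
      fix y assume "y \<in> inverse ` MM"
      then obtain z where z: "z \<in> MM" "y = inverse z" by blast
      have "z \<noteq> 0" using z by (auto simp: MM_def DD_def)
      then show "y \<in> DD" using z key[of z] by (auto simp: MM_def DD_def chi_inverse)
    qed
  qed simp
  moreover have "card DD \<le> card MM"
  proof (rule card_inj_on_le[where f=inverse])
    show "inj_on inverse DD" by (simp add: inj_on_def)
    show "inverse ` DD \<subseteq> MM"
    proof
      fix y assume "y \<in> inverse ` DD"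
      then obtain z where z: "z \<in> DD" "y = inverse z" by blast
      have "z \<noteq> 0" using z by (auto simp: MM_def DD_def)
      then show "y \<in> MM" using z key[of z] by (auto simp: MM_def DD_def chi_inverse)
    qed
  qed simp
  ultimately have "card MM = card DD" by simp
  then show ?thesis using e1 e2 unfolding AA_def MM_def by simp
qed

lemma paley_common:
  assumes ab: "(a::'a) \<noteq> b"
  shows "card {g. chi (a - g) = 1 \<and> chi (b - g) = 1} = (if chi (a - b) = 1 then t else t + 1)"
proof -
  define d where "d = a - b"
  have d: "d \<noteq> 0" using ab by (simp add: d_def)
  define R where "R = {z::'a. chi z = chi d \<and> chi (z - 1) = chi d}"
  have eq: "{g. chi (a - g) = 1 \<and> chi (b - g) = 1} = (\<lambda>z. a - d * z) ` R"
  proof (rule set_eqI, rule iffI)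
    fix g assume g: "g \<in> {g. chi (a - g) = 1 \<and> chi (b - g) = 1}"
    define z where "z = (a - g) / d"
    have 1: "a - g = d * z" using d by (simp add: z_def)
    have 2: "b - g = d * (z - 1)" using d by (simp add: z_def d_def field_simps)
    have "z \<in> R" using g 1 2 chi_d[OF d] by (simp add: R_def)
    moreover have "g = a - d * z" using 1 by (simp add: algebra_simps)
    ultimately show "g \<in> (\<lambda>z. a - d * z) ` R" by blast
  next
    fix g assume "g \<in> (\<lambda>z. a - d * z) ` R"
    then obtain z where z: "z \<in> R" "g = a - d * z" by blast
    have 1: "a - g = d * z" using z by simp
    have 2: "b - g = d * (z - 1)" using z by (simp add: d_def field_simps)
    show "g \<in> {g. chi (a - g) = 1 \<and> chi (b - g) = 1}"
      using z(1) 1 2 chi_d[OF d] by (simp add: R_def)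
  qed
  have "card {g. chi (a - g) = 1 \<and> chi (b - g) = 1} = card R"
    unfolding eq by (rule card_image) (simp add: inj_on_def d)
  moreover have "card R = (if chi d = 1 then t else t + 1)"
  proof (cases "chi d = 1")
    case True then show ?thesis using paley_counts by (simp add: R_def)
  next
    case False
    then have "chi d = -1" using chi_vals[OF d] by simp
    then show ?thesis using paley_counts by (simp add: R_def)
  qed
  ultimately show ?thesis by (simp add: d_def)
qed

end



definition dt :: "'a::field^2 \<Rightarrow> 'a^2 \<Rightarrow> 'a" where "dt u v = u$1 * v$2 - u$2 * v$1"

lemma vec2_eq: "(x::'a^2) = y \<longleftrightarrow> x$1 = y$1 \<and> x$2 = y$2"
  by (simp add: vec_eq_iff forall_2)

lemma cramer1: fixes u1 :: "'a::field"
  assumes "u1 * v2 - u2 * v1 \<noteq> 0"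
  shows "((w1 * v2 - w2 * v1)/(u1 * v2 - u2 * v1)) * u1 + ((u1 * w2 - u2 * w1)/(u1 * v2 - u2 * v1)) * v1 = w1"
    and "((w1 * v2 - w2 * v1)/(u1 * v2 - u2 * v1)) * u2 + ((u1 * w2 - u2 * w1)/(u1 * v2 - u2 * v1)) * v2 = w2"
proof -
  have "((w1 * v2 - w2 * v1)/(u1 * v2 - u2 * v1)) * u1 + ((u1 * w2 - u2 * w1)/(u1 * v2 - u2 * v1)) * v1 = ((w1 * v2 - w2 * v1) * u1 + (u1 * w2 - u2 * w1) * v1) / (u1 * v2 - u2 * v1)"
    by (simp add: add_divide_distrib)
  also have "(w1 * v2 - w2 * v1) * u1 + (u1 * w2 - u2 * w1) * v1 = w1 * (u1 * v2 - u2 * v1)" by (simp add: algebra_simps)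
  finally show "((w1 * v2 - w2 * v1)/(u1 * v2 - u2 * v1)) * u1 + ((u1 * w2 - u2 * w1)/(u1 * v2 - u2 * v1)) * v1 = w1" using assms by simp
  have "((w1 * v2 - w2 * v1)/(u1 * v2 - u2 * v1)) * u2 + ((u1 * w2 - u2 * w1)/(u1 * v2 - u2 * v1)) * v2 = ((w1 * v2 - w2 * v1) * u2 + (u1 * w2 - u2 * w1) * v2) / (u1 * v2 - u2 * v1)"
    by (simp add: add_divide_distrib)
  also have "(w1 * v2 - w2 * v1) * u2 + (u1 * w2 - u2 * w1) * v2 = w2 * (u1 * v2 - u2 * v1)" by (simp add: algebra_simps)
  finally show "((w1 * v2 - w2 * v1)/(u1 * v2 - u2 * v1)) * u2 + ((u1 * w2 - u2 * w1)/(u1 * v2 - u2 * v1)) * v2 = w2" using assms by simp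
qed
lemma cramer_vec: assumes d: "dt u v \<noteq> 0" shows "w = fst ((w$1 * v$2 - w$2 * v$1) / dt u v, (u$1 * w$2 - u$2 * w$1) / dt u v) *s u + snd ((w$1 * v$2 - w$2 * v$1) / dt u v, (u$1 * w$2 - u$2 * w$1) / dt u v) *s (v::'a::field^2)"
  unfolding vec2_eq dt_def using cramer1[OF d[unfolded dt_def], of "w$1" "w$2"] by simp
lemma uniq_vec: assumes d: "dt u v \<noteq> 0" and e1: "w$1 = a * u$1 + b * v$1" and e2: "w$2 = a * u$2 + b * (v::'a::field^2)$2"
  shows "(a, b) = ((w$1 * v$2 - w$2 * v$1) / dt u v, (u$1 * w$2 - u$2 * w$1) / dt u v)"
proof -
  have "a * dt u v = w$1 * v$2 - w$2 * v$1" by (simp add: e1 e2 dt_def algebra_simps)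
  moreover have "b * dt u v = u$1 * w$2 - u$2 * w$1" by (simp add: e1 e2 dt_def algebra_simps)
  ultimately show ?thesis using d by (simp add: field_simps)
qed
lemma basis_indep:
  assumes "is_basis2 u v" "a *s u + b *s v = 0"
  shows "a = 0 \<and> b = 0"
proof -
  have 1: "(0::'a^2) = fst (a, b) *s u + snd (a, b) *s v" using assms(2) by simp
  have 2: "(0::'a^2) = fst (0::'a, 0::'a) *s u + snd (0::'a, 0::'a) *s v" by simp
  from assms(1) have "\<exists>!ab. (0::'a^2) = fst ab *s u + snd ab *s v" unfolding is_basis2_def by blast
  then have "(a, b) = (0, 0)" using 1 2 by blast
  then show ?thesis by simp
qed

lemma basis_rep:
  assumes "is_basis2 u v"
  obtains a b where "w = a *s u + b *s v"
proof -
  from assms obtain ab where "w = fst ab *s u + snd ab *s v" unfolding is_basis2_def by blast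
  then show ?thesis using that by blast
qed

lemma basis_iff: "is_basis2 (u::'a::field^2) v \<longleftrightarrow> dt u v \<noteq> 0"
proof
  assume b: "is_basis2 u v"
  show "dt u v \<noteq> 0"
  proof
    assume d: "dt u v = 0"
    have z1: "(v$2) *s u + (- u$2) *s v = 0" using d by (simp add: vec2_eq dt_def algebra_simps)
    have z2: "(v$1) *s u + (- u$1) *s v = 0" using d by (simp add: vec2_eq dt_def algebra_simps)
    have "v$2 = 0 \<and> u$2 = 0" using basis_indep[OF b z1] by simp
    moreover have "v$1 = 0 \<and> u$1 = 0" using basis_indep[OF b z2] by simp
    ultimately have "(1::'a) *s u + 0 *s v = 0" by (simp add: vec2_eq)
    then have "(1::'a) = 0 \<and> (0::'a) = 0" by (rule basis_indep[OF b])
    then show False by simp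
  qed
next
  assume d: "dt u v \<noteq> 0"
  show "is_basis2 u v" unfolding is_basis2_def
  proof
    fix w :: "'a^2"
    let ?ab = "((w$1 * v$2 - w$2 * v$1) / dt u v, (u$1 * w$2 - u$2 * w$1) / dt u v)"
    show "\<exists>!ab. w = fst ab *s u + snd ab *s v"
    proof (rule ex1I[where a="?ab"])
      show "w = fst ?ab *s u + snd ?ab *s v" by (rule cramer_vec[OF d])
    next
      fix ab assume h: "w = fst ab *s (u::'a^2) + snd ab *s v"
      obtain a b where ab: "ab = (a, b)" by (cases ab)
      have e1: "w$1 = a * u$1 + b * v$1" and e2: "w$2 = a * u$2 + b * v$2" using h ab by simp_all
      show "ab = ?ab" using uniq_vec[OF d e1 e2] ab by simp
    qed
  qed
qed

lemma dt_comb: "dt (a *s u + b *s v) (c *s u + d *s v) = (a * d - b * c) * dt u v"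
  by (simp add: dt_def algebra_simps)

lemma mv_comp: "((A::'a::field^2^2) *v w)$i = A$i$1 * w$1 + A$i$2 * w$2"
  by (simp add: matrix_vector_mult_def sum_2)

lemma dt_mat: "dt ((A::'a::field^2^2) *v u) (A *v v) = det A * dt u v"
  by (simp add: dt_def mv_comp det_2 algebra_simps)

lemma mv_scale: "(A::'a::field^2^2) *v (c *s w) = c *s (A *v w)"
  by (simp add: vec2_eq mv_comp algebra_simps)

lemma mv_add: "(A::'a::field^2^2) *v (x + y) = A *v x + A *v y"
  by (simp add: vec2_eq mv_comp algebra_simps)

definition pt :: "'a::field^2 \<Rightarrow> 'a^2 \<Rightarrow> 'a \<Rightarrow> ('a^2) set" where
  "pt u v a = line (a *s u + v)"

lemma line_scale: "(c::'a::field) \<noteq> 0 \<Longrightarrow> line (c *s w) = line w"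
proof -
  assume c: "c \<noteq> 0"
  show ?thesis unfolding line_def
  proof (rule set_eqI, rule iffI)
    fix x assume "x \<in> {d *s (c *s w) |d. True}"
    then obtain d where "x = d *s (c *s w)" by blast
    then have "x = (d * c) *s w" by (simp add: vec2_eq)
    then show "x \<in> {d *s w |d. True}" by blast
  next
    fix x assume "x \<in> {d *s w |d. True}"
    then obtain d where "x = d *s w" by blast
    then have "x = (d / c) *s (c *s w)" using c by (simp add: vec2_eq)
    then show "x \<in> {d *s (c *s w) |d. True}" by blast
  qed
qed

lemma line_self: "w \<in> line (w::'a::field^2)"
proof -
  have "w = 1 *s w" by (simp add: vec2_eq)
  then show ?thesis unfolding line_def by blast
qed

lemma line_eqD: "line w = line (w'::'a::field^2) \<Longrightarrow> \<exists>c. w' = c *s w"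
  using line_self[of w'] unfolding line_def by auto

lemma basis_u_nz: "is_basis2 u v \<Longrightarrow> u \<noteq> 0"
proof
  assume b: "is_basis2 u v" and u: "u = 0"
  have "(1::'a) *s u + 0 *s v = 0" using u by (simp add: vec2_eq)
  then have "(1::'a) = 0 \<and> (0::'a) = 0" by (rule basis_indep[OF b])
  then show False by simp
qed

lemma basis_comb_nz: "is_basis2 u v \<Longrightarrow> b \<noteq> 0 \<Longrightarrow> a *s u + b *s v \<noteq> 0"
  using basis_indep by blast

lemma pt_nz: "is_basis2 u v \<Longrightarrow> a *s u + v \<noteq> 0"
proof
  assume b: "is_basis2 u v" and h: "a *s u + v = 0"
  have "a *s u + (1::'a) *s v = 0" using h by (simp add: vec2_eq)
  then have "a = 0 \<and> (1::'a) = 0" by (rule basis_indep[OF b])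
  then show False by simp
qed

lemma pt_inj: assumes b: "is_basis2 u v" and e: "pt u v a = pt u v b'" shows "a = b'"
proof -
  obtain c where c: "b' *s u + v = c *s (a *s u + v)" using line_eqD e unfolding pt_def by blast
  have "(b' - c * a) *s u + (1 - c) *s v = 0" using c by (simp add: vec2_eq algebra_simps)
  then have "b' - c * a = 0 \<and> 1 - c = 0" by (rule basis_indep[OF b])
  then show ?thesis by simp
qed

lemma pt_ne: assumes b: "is_basis2 u v" shows "pt u v a \<noteq> line u"
proof
  assume e: "pt u v a = line u"
  obtain c where c: "a *s u + v = c *s u" using line_eqD e unfolding pt_def by metis
  have "(a - c) *s u + (1::'a) *s v = 0" using c by (simp add: vec2_eq algebra_simps)
  then have "a - c = 0 \<and> (1::'a) = 0" by (rule basis_indep[OF b])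
  then show False by simp
qed

lemma projline_eq: assumes b: "is_basis2 (u::'a::field^2) v" shows "projline = insert (line u) (range (pt u v))"
proof (rule set_eqI, rule iffI)
  fix P :: "('a^2) set" assume "P \<in> projline"
  then obtain w where w: "P = line w" "w \<noteq> 0" unfolding projline_def by blast
  obtain a c where ac: "w = a *s u + c *s v" using basis_rep[OF b] by blast
  show "P \<in> insert (line u) (range (pt u v))"
  proof (cases "c = 0")
    case True
    then have "a \<noteq> 0" using w ac by auto
    moreover have "w = a *s u" using ac True by (simp add: vec2_eq)
    ultimately have "P = line u" using w line_scale by simp
    then show ?thesis by simp
  next
    case False
    have "w = c *s ((a / c) *s u + v)" using ac False by (simp add: vec2_eq algebra_simps)
    then have "line w = line ((a / c) *s u + v)" using False line_scale by metis
    then have "P = pt u v (a / c)" using w unfolding pt_def by simp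
    then show ?thesis by simp
  qed
next
  fix P assume "P \<in> insert (line u) (range (pt u v))"
  then show "P \<in> projline"
    using basis_u_nz[OF b] pt_nz[OF b] unfolding projline_def pt_def by auto
qed

lemma Xu_eq: assumes b: "is_basis2 u v" shows "Xu u = range (pt u v)"
  using projline_eq[OF b] pt_ne[OF b] unfolding Xu_def by auto
lemma GammaAdj_iff: "GammaAdj u v P Q \<longleftrightarrow> (\<exists>a b. P = pt u v a \<and> Q = pt u v b \<and> chi (a - b) = 1)"
  unfolding GammaAdj_def pt_def chi_sq by blast

lemma GammaAdj_pt: "is_basis2 u v \<Longrightarrow> GammaAdj u v (pt u v a) (pt u v b) \<longleftrightarrow> chi (a - b) = 1"
  unfolding GammaAdj_iff using pt_inj by metis

lemma adj_Gamma: "is_basis2 u v \<Longrightarrow> adj (Gamma u v) P Q \<longleftrightarrow> GammaAdj u v P Q"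
  unfolding adj_def Gamma_def by (auto simp: Xu_eq GammaAdj_iff)

lemma adj_Gamma_pt: "is_basis2 u v \<Longrightarrow> adj (Gamma u v) (pt u v a) (pt u v b) \<longleftrightarrow> chi (a - b) = 1"
  by (simp add: adj_Gamma GammaAdj_pt)


lemma relpowp_2: "(R ^^ 2) x y \<longleftrightarrow> (\<exists>z. R x z \<and> R z y)"
  by (auto simp: numeral_2_eq_2 relcompp_apply)

lemma graph_dist_eq:
  assumes "(adj G ^^ n) x y" "\<forall>m<n. \<not> (adj G ^^ m) x y"
  shows "graph_dist G x y = enat n"
proof -
  have "(LEAST n. (adj G ^^ n) x y) = n"
    by (rule Least_equality) (use assms not_less in auto)
  then show ?thesis using assms unfolding graph_dist_def by auto
qed

lemma graph_dist_0: "graph_dist G x x = 0"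
  using graph_dist_eq[where G=G and n=0 and x=x and y=x] by (simp add: zero_enat_def)

lemma graph_dist_1: assumes "adj G x y" "x \<noteq> y" shows "graph_dist G x y = 1"
proof -
  have "(adj G ^^ 1) x y" using assms by (simp add: relcompp_apply)
  moreover have "\<forall>m<1. \<not> (adj G ^^ m) x y" using assms by simp
  ultimately show ?thesis using graph_dist_eq by (metis one_enat_def)
qed

lemma graph_dist_2: assumes "adj G x z" "adj G z y" "\<not> adj G x y" "x \<noteq> y" shows "graph_dist G x y = 2"
proof -
  have "(adj G ^^ 2) x y" using assms relpowp_2 by metis
  moreover have "\<forall>m<2. \<not> (adj G ^^ m) x y"
  proof (intro allI impI)
    fix m :: nat assume "m < 2"
    then have "m = 0 \<or> m = 1" by auto
    then show "\<not> (adj G ^^ m) x y" using assms by (auto simp: relcompp_apply)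
  qed
  ultimately have "graph_dist G x y = enat 2" by (rule graph_dist_eq)
  then show ?thesis by (simp add: numeral_eq_enat)
qed

context
  fixes t :: nat
  assumes q: "CARD('a::{field,finite}) = 4 * t + 5"
begin

lemma GammaAdj_sym: "GammaAdj (u::'a^2) v P Q \<Longrightarrow> GammaAdj u v Q P"
proof -
  assume "GammaAdj u v P Q"
  then obtain a b where ab: "P = pt u v a" "Q = pt u v b" "chi (a - b) = 1" unfolding GammaAdj_iff by blast
  have "chi (b - a) = chi (a - b)" using chi_neg[OF q, of "a - b"] by simp
  then have "chi (b - a) = 1" using ab(3) by simp
  then show ?thesis unfolding GammaAdj_iff using ab by blast
qed

lemma adj_Gamma_sym: "is_basis2 (u::'a^2) v \<Longrightarrow> adj (Gamma u v) P Q \<Longrightarrow> adj (Gamma u v) Q P"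
  using GammaAdj_sym adj_Gamma by metis

lemma nbrs_pt:
  assumes b: "is_basis2 (u::'a^2) v"
  shows "card (nbrs (Gamma u v) (pt u v a)) = 2 * t + 2"
proof -
  have "nbrs (Gamma u v) (pt u v a) = {x \<in> range (pt u v). adj (Gamma u v) (pt u v a) x}"
    by (simp add: nbrs_def Gamma_def Xu_eq[OF b])
  also have "\<dots> = pt u v ` {b. chi (a - b) = 1}" by (auto simp: adj_Gamma_pt[OF b])
  finally have "nbrs (Gamma u v) (pt u v a) = pt u v ` {b. chi (a - b) = 1}" .
  then have "card (nbrs (Gamma u v) (pt u v a)) = card {b. chi (a - b) = 1}"
    using pt_inj[OF b] by (simp add: card_image inj_on_def)
  also have "{b. chi (a - b) = 1} = (\<lambda>z. a - z) ` {z. chi z = 1}"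
  proof (rule set_eqI, rule iffI)
    fix x assume "x \<in> {b. chi (a - b) = 1}"
    moreover have "x = a - (a - x)" by simp
    ultimately show "x \<in> (\<lambda>z. a - z) ` {z. chi z = 1}" by (intro image_eqI[where x="a - x"]) auto
  qed auto
  also have "card \<dots> = card {z::'a. chi z = 1}" by (rule card_image) (simp add: inj_on_def)
  finally show ?thesis using card_chi1[OF q] by simp
qed

lemma common_pt:
  assumes b: "is_basis2 (u::'a^2) v" and ab: "a \<noteq> b'"
  shows "card (common_nbrs (Gamma u v) (pt u v a) (pt u v b')) = (if chi (a - b') = 1 then t else t + 1)"
proof -
  have "common_nbrs (Gamma u v) (pt u v a) (pt u v b') = {x \<in> range (pt u v). adj (Gamma u v) (pt u v a) x \<and> adj (Gamma u v) (pt u v b') x}"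
    by (simp add: common_nbrs_def Gamma_def Xu_eq[OF b])
  also have "\<dots> = pt u v ` {g. chi (a - g) = 1 \<and> chi (b' - g) = 1}" by (auto simp: adj_Gamma_pt[OF b])
  finally have "common_nbrs (Gamma u v) (pt u v a) (pt u v b') = pt u v ` {g. chi (a - g) = 1 \<and> chi (b' - g) = 1}" .
  then have "card (common_nbrs (Gamma u v) (pt u v a) (pt u v b')) = card {g. chi (a - g) = 1 \<and> chi (b' - g) = 1}"
    using pt_inj[OF b] by (simp add: card_image inj_on_def)
  then show ?thesis using paley_common[OF q ab] by simp
qed

lemma dist_pt:
  assumes b: "is_basis2 (u::'a^2) v" and ab: "a \<noteq> b'" and n: "chi (a - b') \<noteq> 1"
  shows "graph_dist (Gamma u v) (pt u v a) (pt u v b') = 2"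
proof -
  have "card (common_nbrs (Gamma u v) (pt u v a) (pt u v b')) = t + 1"
    using common_pt[OF b ab] n by simp
  then have "common_nbrs (Gamma u v) (pt u v a) (pt u v b') \<noteq> {}" by auto
  then obtain z where z: "z \<in> common_nbrs (Gamma u v) (pt u v a) (pt u v b')" by blast
  then have 1: "adj (Gamma u v) (pt u v a) z" and 2: "adj (Gamma u v) (pt u v b') z"
    unfolding common_nbrs_def by auto
  have 3: "adj (Gamma u v) z (pt u v b')" by (rule adj_Gamma_sym[OF b 2])
  note 1 3
  moreover have "\<not> adj (Gamma u v) (pt u v a) (pt u v b')" using adj_Gamma_pt[OF b] n by simp
  moreover have "pt u v a \<noteq> pt u v b'" using pt_inj[OF b] ab by blast
  ultimately show ?thesis by (rule graph_dist_2)
qed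

end
context
  fixes t :: nat
  assumes q: "CARD('a::{field,finite}) = 4 * t + 5"
begin

lemma Gamma_fst: "fst (Gamma u v) = Xu u" by (simp add: Gamma_def)

lemma dist_le2:
  assumes b: "is_basis2 (u::'a^2) v" and x: "x \<in> Xu u" and y: "y \<in> Xu u"
  shows "graph_dist (Gamma u v) x y \<le> 2"
proof -
  obtain a where a: "x = pt u v a" using x Xu_eq[OF b] by auto
  obtain c where c: "y = pt u v c" using y Xu_eq[OF b] by auto
  show ?thesis
  proof (cases "a = c")
    case True
    then have "graph_dist (Gamma u v) x y = 0" using a c graph_dist_0 by simp
    then show ?thesis by simp
  next
    case False
    show ?thesis
    proof (cases "chi (a - c) = 1")
      case True
      then have "adj (Gamma u v) x y" using adj_Gamma_pt[OF b] a c by simp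
      moreover have "x \<noteq> y" using pt_inj[OF b] False a c by blast
      ultimately show ?thesis using graph_dist_1 by (metis one_le_numeral)
    next
      case f2: False
      show ?thesis using dist_pt[OF q b False f2] a c by simp
    qed
  qed
qed

lemma part1:
  assumes b: "is_basis2 (u::'a^2) v"
  shows "diameter (Gamma u v) = 2
      \<and> (\<forall>x\<in>Xu u. card (nbrs (Gamma u v) x) = (CARD('a) - 1) div 2
                   \<and> card (nbrs (Gamma u v) x) = 2 * (t + 1))
      \<and> (\<forall>x\<in>Xu u. \<forall>y\<in>Xu u. adj (Gamma u v) x y
             \<longrightarrow> card (common_nbrs (Gamma u v) x y) = t)
      \<and> (\<forall>x\<in>Xu u. \<forall>y\<in>Xu u. graph_dist (Gamma u v) x y = 2
             \<longrightarrow> card (common_nbrs (Gamma u v) x y) = t + 1)"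
proof (intro conjI ballI impI)
  show "diameter (Gamma u v) = 2"
  proof (rule antisym)
    show "diameter (Gamma u v) \<le> 2"
      unfolding diameter_def Gamma_fst by (intro SUP_least) (auto intro: dist_le2[OF b])
    have "card {z::'a. chi z = -1} \<noteq> 0" using card_chim1[OF q] by simp
    then obtain n :: 'a where n: "chi n = -1" by fastforce
    have n0: "(0::'a) \<noteq> n" using n by auto
    have nc: "chi (0 - n) \<noteq> 1" using n chi_neg[OF q, of n] by simp
    have d: "graph_dist (Gamma u v) (pt u v 0) (pt u v n) = 2" by (rule dist_pt[OF q b n0 nc])
    have m: "pt u v 0 \<in> Xu u" "pt u v n \<in> Xu u" using Xu_eq[OF b] by auto
    show "2 \<le> diameter (Gamma u v)"
      unfolding diameter_def Gamma_fst
      by (rule SUP_upper2[OF m(1)], rule SUP_upper2[OF m(2)]) (simp add: d)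
  qed
next
  fix x assume x: "x \<in> Xu u"
  obtain a where a: "x = pt u v a" using x Xu_eq[OF b] by auto
  show "card (nbrs (Gamma u v) x) = 2 * (t + 1)" using nbrs_pt[OF q b] a by simp
  then show "card (nbrs (Gamma u v) x) = (CARD('a) - 1) div 2" using q by simp
next
  fix x y assume x: "x \<in> Xu u" and y: "y \<in> Xu u" and xy: "adj (Gamma u v) x y"
  obtain a where a: "x = pt u v a" using x Xu_eq[OF b] by auto
  obtain c where c: "y = pt u v c" using y Xu_eq[OF b] by auto
  have ch: "chi (a - c) = 1" using xy a c adj_Gamma_pt[OF b] by simp
  then have "a \<noteq> c" by auto
  then show "card (common_nbrs (Gamma u v) x y) = t" using common_pt[OF q b] a c ch by simp
next
  fix x y assume x: "x \<in> Xu u" and y: "y \<in> Xu u" and xy: "graph_dist (Gamma u v) x y = 2"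
  obtain a where a: "x = pt u v a" using x Xu_eq[OF b] by auto
  obtain c where c: "y = pt u v c" using y Xu_eq[OF b] by auto
  have ac: "a \<noteq> c" using xy a c graph_dist_0 by (metis zero_neq_numeral)
  have "chi (a - c) \<noteq> 1"
  proof
    assume "chi (a - c) = 1"
    then have "adj (Gamma u v) x y" using adj_Gamma_pt[OF b] a c by simp
    moreover have "x \<noteq> y" using pt_inj[OF b] ac a c by blast
    ultimately show False using graph_dist_1 xy by (metis numeral_One num.simps(4) numeral_eq_iff)
  qed
  then show "card (common_nbrs (Gamma u v) x y) = t + 1" using common_pt[OF q b ac] a c by simp
qed

end
lemma eps_pm1: "eps E i j = 1 \<or> eps E i j = -1" by (simp add: eps_def)
lemma eps_sq: "eps E i j * eps E i j = 1" by (simp add: eps_def)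
lemma eps_refl[simp]: "eps E i i = 1" by (simp add: eps_def)
lemma eps_sym: "(\<forall>x y. E x y \<longrightarrow> E y x) \<Longrightarrow> eps E i j = eps E j i" by (auto simp: eps_def)
lemma eps_m1: "i \<noteq> j \<Longrightarrow> eps E i j = -1 \<longleftrightarrow> E i j" by (simp add: eps_def)

lemma pm1_sq: "(a::int) = 1 \<or> a = -1 \<Longrightarrow> a * a = 1" by auto

lemma localize_adj:
  fixes G :: "'v graph"
  assumes z: "z \<in> fst G" and sym: "\<forall>x y. adj G x y \<longrightarrow> adj G y x"
  shows "adj (localize G z) x y \<longleftrightarrow> x \<in> fst G \<and> y \<in> fst G \<and> x \<noteq> y \<and>
           eps (adj G) x z * eps (adj G) y z * eps (adj G) x y = -1"
proof -
  define V where "V = fst G"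
  define E where "E = adj G"
  define EL where "EL = (\<lambda>x y. x \<in> V \<and> y \<in> V \<and> x \<noteq> y \<and> eps E x z * eps E y z * eps E x y = -1)"
  define P where "P = (\<lambda>E'. simple_graph_on V E' \<and> associated V E E' \<and> (\<forall>y. \<not> E' z y))"
  have esym: "eps E i j = eps E j i" for i j using sym eps_sym unfolding E_def by metis
  have PEL: "P EL"
    unfolding P_def
  proof (intro conjI)
    show "simple_graph_on V EL"
      unfolding simple_graph_on_def EL_def using esym by (auto simp: mult_ac)
    show "associated V E EL"
      unfolding associated_def
    proof (intro exI[where x="\<lambda>i. eps E i z"] conjI ballI)
      fix i assume "i \<in> V" show "eps E i z = 1 \<or> eps E i z = -1" by (rule eps_pm1)
    next
      fix i j assume i: "i \<in> V" and j: "j \<in> V"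
      show "eps EL i j = eps E i z * eps E j z * eps E i j"
      proof (cases "i = j")
        case True then show ?thesis using eps_sq by simp
      next
        case False
        have pm: "eps E i z * eps E j z * eps E i j = 1 \<or> eps E i z * eps E j z * eps E i j = -1"
          using eps_pm1[of E i z] eps_pm1[of E j z] eps_pm1[of E i j] by auto
        have "eps EL i j = (if EL i j then -1 else 1)" using False by (simp add: eps_def)
        then show ?thesis using False i j pm unfolding EL_def by auto
      qed
    qed
    show "\<forall>y. \<not> EL z y"
    proof
      fix y
      have "eps E z z * eps E y z * eps E z y = 1" using esym[of y z] eps_sq by simp
      then show "\<not> EL z y" unfolding EL_def by auto
    qed
  qed
  have uniq: "E' = EL" if PE': "P E'" for E'
  proof (intro ext)
    fix x y
    have sg: "simple_graph_on V E'" and as: "associated V E E'" and iso: "\<forall>y. \<not> E' z y"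
      using PE' unfolding P_def by auto
    obtain \<nu> where \<nu>: "\<forall>i\<in>V. \<nu> i = 1 \<or> \<nu> i = -1" "\<forall>i\<in>V. \<forall>j\<in>V. eps E' i j = \<nu> i * \<nu> j * eps E i j"
      using as unfolding associated_def by blast
    have zV: "z \<in> V" using z by (simp add: V_def)
    have nu: "\<nu> i = \<nu> z * eps E i z" if iV: "i \<in> V" for i
    proof -
      have "eps E' i z = 1"
      proof (cases "i = z")
        case True then show ?thesis by simp
      next
        case False
        have "\<not> E' i z" using iso sg unfolding simple_graph_on_def by blast
        then show ?thesis using False by (simp add: eps_def)
      qed
      then have h: "\<nu> i * \<nu> z * eps E i z = 1" using \<nu>(2) iV zV by simp
      have "\<nu> i = \<nu> i * ((\<nu> z * \<nu> z) * (eps E i z * eps E i z))"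
        using pm1_sq[OF \<nu>(1)[rule_format, OF zV]] eps_sq[of E i z] by simp
      also have "\<dots> = (\<nu> i * \<nu> z * eps E i z) * (\<nu> z * eps E i z)" by (simp add: mult_ac)
      also have "\<dots> = \<nu> z * eps E i z" using h by simp
      finally show ?thesis .
    qed
    show "E' x y = EL x y"
    proof (cases "x \<in> V \<and> y \<in> V \<and> x \<noteq> y")
      case False
      then have "\<not> E' x y" using sg unfolding simple_graph_on_def by blast
      then show ?thesis using False unfolding EL_def by blast
    next
      case True
      have "eps E' x y = \<nu> x * \<nu> y * eps E x y" using \<nu>(2) True by blast
      also have "\<dots> = (\<nu> z * \<nu> z) * (eps E x z * eps E y z * eps E x y)"
        using nu True by (simp add: mult_ac)
      also have "\<dots> = eps E x z * eps E y z * eps E x y"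
        using pm1_sq[OF \<nu>(1)[rule_format, OF zV]] by simp
      finally have "eps E' x y = eps E x z * eps E y z * eps E x y" .
      then show ?thesis using True eps_m1[of x y E'] unfolding EL_def by auto
    qed
  qed
  have "(THE E'. P E') = EL" by (rule the_equality[where P=P, OF PEL uniq])
  then have sl: "snd (localize G z) = EL" unfolding localize_def P_def V_def E_def by simp
  have fl: "fst (localize G z) = V" by (simp add: localize_def V_def)
  have "adj (localize G z) x y \<longleftrightarrow> x \<in> V \<and> y \<in> V \<and> EL x y"
    unfolding adj_def[of "localize G z"] fl sl by simp
  then show ?thesis unfolding EL_def V_def E_def by auto
qed
lemma localize_iso:
  assumes z: "z \<in> fst G" and sym: "\<forall>x y. adj G x y \<longrightarrow> adj G y x"
  shows "\<not> adj (localize G z) z y"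
proof -
  have "eps (adj G) z z * eps (adj G) y z * eps (adj G) z y = 1"
    using eps_sym[OF sym, of y z] eps_sq[of "adj G" y z] by simp
  then show ?thesis using localize_adj[OF z sym] by simp
qed

lemma dt_swap: "dt v u = - dt u v" by (simp add: dt_def algebra_simps)

lemma basis_swap: assumes "is_basis2 u v" shows "is_basis2 v u"
proof -
  have d: "dt u v \<noteq> 0" using assms basis_iff by blast
  have "dt v u = - dt u v" by (rule dt_swap)
  then have "dt v u \<noteq> 0" using d by simp
  then show ?thesis using basis_iff by blast
qed

lemma pt_zero: "pt u v 0 = line v" by (simp add: pt_def)

lemma pt_swap0: "pt v u 0 = line u" by (simp add: pt_def)

lemma pt_swap: "(g::'a::field) \<noteq> 0 \<Longrightarrow> pt v u g = pt u v (inverse g)"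
proof -
  assume g: "g \<noteq> 0"
  have eq: "g *s v + u = g *s (inverse g *s u + v)" using g by (simp add: vec2_eq algebra_simps)
  show ?thesis unfolding pt_def by (subst eq) (rule line_scale[OF g])
qed

lemma projline_pt: "is_basis2 u v \<Longrightarrow> pt u v a \<in> projline"
  by (simp add: projline_eq)

lemma line_u_projline: "is_basis2 u v \<Longrightarrow> line u \<in> projline"
  by (simp add: projline_eq)

context
  fixes t :: nat
  assumes q: "CARD('a::{field,finite}) = 4 * t + 5"
begin

lemma adj_hat: "is_basis2 (u::'a^2) v \<Longrightarrow> adj (Gamma_hat u v) P Q \<longleftrightarrow> GammaAdj u v P Q"
  unfolding adj_def Gamma_hat_def using projline_pt by (auto simp: GammaAdj_iff)

lemma hat_sym: "is_basis2 (u::'a^2) v \<Longrightarrow> \<forall>x y. adj (Gamma_hat u v) x y \<longrightarrow> adj (Gamma_hat u v) y x"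
  using adj_hat GammaAdj_sym[OF q] by metis

lemma eps_hat_u1: "is_basis2 (u::'a^2) v \<Longrightarrow> eps (adj (Gamma_hat u v)) (line u) w = 1"
  unfolding eps_def by (auto simp: adj_hat GammaAdj_iff dest: pt_ne)

lemma eps_hat_u2: "is_basis2 (u::'a^2) v \<Longrightarrow> eps (adj (Gamma_hat u v)) w (line u) = 1"
  unfolding eps_def by (auto simp: adj_hat GammaAdj_iff dest: pt_ne)

lemma eps_hat_pt: "is_basis2 (u::'a^2) v \<Longrightarrow> a \<noteq> b \<Longrightarrow> eps (adj (Gamma_hat u v)) (pt u v a) (pt u v b) = - chi (a - b)"
proof -
  assume b: "is_basis2 u v" and ab: "a \<noteq> b"
  have ne: "pt u v a \<noteq> pt u v b" using pt_inj[OF b] ab by blast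
  have "a - b \<noteq> 0" using ab by simp
  then show ?thesis using chi_vals[of "a - b"] ne
    by (auto simp: eps_def adj_hat[OF b] GammaAdj_pt[OF b])
qed

lemma chi_inv_diff: "(a::'a) \<noteq> 0 \<Longrightarrow> b \<noteq> 0 \<Longrightarrow> chi (inverse a - inverse b) = chi a * chi b * chi (a - b)"
proof -
  assume a: "a \<noteq> 0" and b: "b \<noteq> 0"
  have eq: "inverse a - inverse b = (- (a - b)) / (a * b)" using a b by (simp add: field_simps)
  have "chi (inverse a - inverse b) = chi ((- (a - b)) / (a * b))" unfolding eq ..
  also have "\<dots> = chi (- (a - b)) * (chi a * chi b)" by (simp only: chi_divide[OF q] chi_mult[OF q])
  also have "\<dots> = chi (a - b) * (chi a * chi b)" by (simp only: chi_neg[OF q])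
  finally show ?thesis by (simp add: mult_ac)
qed

lemma part2:
  assumes b: "is_basis2 (u::'a^2) v"
  shows "(\<forall>y. \<not> adj (localize (Gamma_hat u v) (line v)) (line v) y)
      \<and> induced (localize (Gamma_hat u v) (line v)) (projline - {line v}) = Gamma v u"
proof
  have zin: "line v \<in> fst (Gamma_hat u v)" using projline_pt[OF b, of 0] by (simp add: pt_zero Gamma_hat_def)
  show "\<forall>y. \<not> adj (localize (Gamma_hat u v) (line v)) (line v) y"
    using localize_iso[OF zin hat_sym[OF b]] by blast
  let ?L = "localize (Gamma_hat u v) (line v)"
  let ?E = "adj (Gamma_hat u v)"
  have b': "is_basis2 v u" by (rule basis_swap[OF b])
  have W: "projline - {line v} = Xu v" by (simp add: Xu_def)
  have LA: "adj ?L x y \<longleftrightarrow> x \<in> projline \<and> y \<in> projline \<and> x \<noteq> y \<and> eps ?E x (line v) * eps ?E y (line v) * eps ?E x y = -1" for x y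
    using localize_adj[OF zin hat_sym[OF b]] by (simp add: Gamma_hat_def)
  have key: "adj ?L (pt v u g) (pt v u d) \<longleftrightarrow> chi (g - d) = 1" for g d
  proof (cases "g = d")
    case True then show ?thesis using LA by simp
  next
    case gd: False
    have ne: "pt v u g \<noteq> pt v u d" using pt_inj[OF b'] gd by blast
    have inP: "pt v u g \<in> projline" "pt v u d \<in> projline" using projline_pt[OF b'] by auto
    have ev: "eps ?E (pt v u x) (line v) = - chi x" if x0: "x \<noteq> 0" for x
    proof -
      have ix: "inverse x \<noteq> 0" using x0 by simp
      have "eps ?E (pt u v (inverse x)) (pt u v 0) = - chi (inverse x - 0)"
        by (rule eps_hat_pt[OF b ix])
      then show ?thesis unfolding pt_swap[OF x0, of v u, symmetric] pt_zero by (simp add: chi_inverse[OF q])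
    qed
    show ?thesis
    proof (cases "g = 0")
      case g0: True
      then have d0: "d \<noteq> 0" using gd by simp
      have "eps ?E (pt v u g) (line v) * eps ?E (pt v u d) (line v) * eps ?E (pt v u g) (pt v u d) = - chi d"
        using g0 eps_hat_u1[OF b] ev[OF d0] by (simp add: pt_swap0)
      then show ?thesis using LA ne inP g0 chi_neg[OF q, of d] by simp
    next
      case g0: False
      show ?thesis
      proof (cases "d = 0")
        case d0: True
        have "eps ?E (pt v u g) (line v) * eps ?E (pt v u d) (line v) * eps ?E (pt v u g) (pt v u d) = - chi g"
          using d0 eps_hat_u1[OF b] eps_hat_u2[OF b] ev[OF g0] by (simp add: pt_swap0)
        then show ?thesis using LA ne inP d0 by simp
      next
        case d0: False
        have i1: "inverse g \<noteq> inverse d" using gd by simp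
        have e1: "eps ?E (pt v u g) (line v) = - chi g" by (rule ev[OF g0])
        have e2: "eps ?E (pt v u d) (line v) = - chi d" by (rule ev[OF d0])
        have e3: "eps ?E (pt v u g) (pt v u d) = - chi (inverse g - inverse d)"
          unfolding pt_swap[OF g0, of v u] pt_swap[OF d0, of v u] by (rule eps_hat_pt[OF b i1])
        have e4: "chi (inverse g - inverse d) = chi g * chi d * chi (g - d)"
          using chi_inv_diff[of g d] g0 d0 by simp
        have gg: "chi g * chi g = 1" "chi d * chi d = 1"
          using chi_vals[OF g0] chi_vals[OF d0] by auto
        have "eps ?E (pt v u g) (line v) * eps ?E (pt v u d) (line v) * eps ?E (pt v u g) (pt v u d)
              = - ((chi g * chi g) * (chi d * chi d) * chi (g - d))"
          unfolding e1 e2 e3 e4 by (simp add: mult_ac)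
        also have "\<dots> = - chi (g - d)" using gg by simp
        finally show ?thesis using LA ne inP by simp
      qed
    qed
  qed
  show "induced ?L (projline - {line v}) = Gamma v u"
    unfolding induced_def Gamma_def W
  proof (intro arg_cong[where f="Pair (Xu v)"] ext)
    fix x y
    show "(x \<in> Xu v \<and> y \<in> Xu v \<and> adj ?L x y) = GammaAdj v u x y"
      using key unfolding Xu_eq[OF b'] GammaAdj_iff by auto
  qed
qed

end
lemma proj_act_line: "proj_act (A::'a::field^2^2) (line w) = line (A *v w)"
  unfolding proj_act_def line_def
proof (rule set_eqI, rule iffI)
  fix x assume "x \<in> (*v) A ` {c *s w |c. True}"
  then obtain c where "x = A *v (c *s w)" by blast
  then have "x = c *s (A *v w)" by (simp add: mv_scale)
  then show "x \<in> {c *s (A *v w) |c. True}" by blast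
next
  fix x assume "x \<in> {c *s (A *v w) |c. True}"
  then obtain c where "x = c *s (A *v w)" by blast
  then have "x = A *v (c *s w)" by (simp add: mv_scale)
  then show "x \<in> (*v) A ` {c *s w |c. True}" by blast
qed

lemma proj_act_pt: "proj_act (A::'a::field^2^2) (pt u v a) = pt (A *v u) (A *v v) a"
  unfolding pt_def proj_act_line by (simp add: mv_add mv_scale)

lemma basis_mat: "is_basis2 u v \<Longrightarrow> det (A::'a::field^2^2) \<noteq> 0 \<Longrightarrow> is_basis2 (A *v u) (A *v v)"
  by (simp add: basis_iff dt_mat)

lemma pt_change:
  assumes n: "(n::'a::field) \<noteq> 0"
  shows "pt (l *s u) (m *s u + n *s v) x = pt u v ((x * l + m) / n)"
proof -
  have eq: "x *s (l *s u) + (m *s u + n *s v) = n *s (((x * l + m) / n) *s u + v)"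
    using n by (simp add: vec2_eq field_simps)
  show ?thesis unfolding pt_def by (subst eq) (rule line_scale[OF n])
qed

context
  fixes t :: nat
  assumes q: "CARD('a::{field,finite}) = 4 * t + 5"
begin

lemma part3a:
  assumes b: "is_basis2 (u::'a^2) v" and phi: "invertible \<phi>"
  shows "graph_image (proj_act \<phi>) (Gamma u v) = Gamma (\<phi> *v u) (\<phi> *v v)"
proof -
  have d: "det \<phi> \<noteq> 0" using phi invertible_det_nz by blast
  have b': "is_basis2 (\<phi> *v u) (\<phi> *v v)" by (rule basis_mat[OF b d])
  have 1: "proj_act \<phi> ` fst (Gamma u v) = Xu (\<phi> *v u)"
    unfolding Gamma_def fst_conv Xu_eq[OF b] Xu_eq[OF b'] by (auto simp: proj_act_pt image_iff)
  have 2: "(\<lambda>P Q. \<exists>x y. P = proj_act \<phi> x \<and> Q = proj_act \<phi> y \<and> adj (Gamma u v) x y) = GammaAdj (\<phi> *v u) (\<phi> *v v)"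
  proof (intro ext)
    fix P Q
    show "(\<exists>x y. P = proj_act \<phi> x \<and> Q = proj_act \<phi> y \<and> adj (Gamma u v) x y) = GammaAdj (\<phi> *v u) (\<phi> *v v) P Q"
      unfolding adj_Gamma[OF b] GammaAdj_iff
    proof
      assume "\<exists>x y. P = proj_act \<phi> x \<and> Q = proj_act \<phi> y \<and> (\<exists>a b. x = pt u v a \<and> y = pt u v b \<and> chi (a - b) = 1)"
      then obtain a b where "P = proj_act \<phi> (pt u v a)" "Q = proj_act \<phi> (pt u v b)" "chi (a - b) = 1" by blast
      then show "\<exists>a b. P = pt (\<phi> *v u) (\<phi> *v v) a \<and> Q = pt (\<phi> *v u) (\<phi> *v v) b \<and> chi (a - b) = 1"
        by (auto simp: proj_act_pt)
    next
      assume "\<exists>a b. P = pt (\<phi> *v u) (\<phi> *v v) a \<and> Q = pt (\<phi> *v u) (\<phi> *v v) b \<and> chi (a - b) = 1"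
      then obtain a b where "P = proj_act \<phi> (pt u v a)" "Q = proj_act \<phi> (pt u v b)" "chi (a - b) = 1"
        by (auto simp: proj_act_pt)
      then show "\<exists>x y. P = proj_act \<phi> x \<and> Q = proj_act \<phi> y \<and> (\<exists>a b. x = pt u v a \<and> y = pt u v b \<and> chi (a - b) = 1)"
        by blast
    qed
  qed
  show ?thesis unfolding graph_image_def 1 2 by (simp add: Gamma_def)
qed

lemma GammaAdj_change:
  assumes b: "is_basis2 (u::'a^2) v" and l: "l \<noteq> 0" and n: "n \<noteq> 0"
  shows "GammaAdj (l *s u) (m *s u + n *s v) P Q \<longleftrightarrow>
         (\<exists>a c. P = pt u v a \<and> Q = pt u v c \<and> chi (a - c) * chi (l * n) = 1)"
proof
  assume "GammaAdj (l *s u) (m *s u + n *s v) P Q"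
  then obtain x y where xy: "P = pt (l *s u) (m *s u + n *s v) x" "Q = pt (l *s u) (m *s u + n *s v) y" "chi (x - y) = 1"
    unfolding GammaAdj_iff by blast
  let ?a = "(x * l + m) / n" and ?c = "(y * l + m) / n"
  have "?a - ?c = (x - y) * l / n" using n by (simp add: field_simps)
  then have "chi (?a - ?c) = chi (l * n)" using xy(3) by (simp add: chi_divide[OF q] chi_mult[OF q])
  moreover have "chi (l * n) * chi (l * n) = 1" using chi_vals[of "l * n"] l n by auto
  ultimately show "\<exists>a c. P = pt u v a \<and> Q = pt u v c \<and> chi (a - c) * chi (l * n) = 1"
    using xy pt_change[OF n] by metis
next
  assume "\<exists>a c. P = pt u v a \<and> Q = pt u v c \<and> chi (a - c) * chi (l * n) = 1"
  then obtain a c where ac: "P = pt u v a" "Q = pt u v c" "chi (a - c) * chi (l * n) = 1" by blast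
  let ?x = "(a * n - m) / l" and ?y = "(c * n - m) / l"
  have pa: "pt (l *s u) (m *s u + n *s v) ?x = pt u v a" using pt_change[OF n] l n by (simp add: field_simps)
  have pc: "pt (l *s u) (m *s u + n *s v) ?y = pt u v c" using pt_change[OF n] l n by (simp add: field_simps)
  have "?x - ?y = (a - c) * n / l" using l by (simp add: field_simps)
  then have "chi (?x - ?y) = chi (a - c) * chi (l * n)" by (simp add: chi_divide[OF q] chi_mult[OF q] mult_ac)
  then have "chi (?x - ?y) = 1" using ac(3) by simp
  then show "GammaAdj (l *s u) (m *s u + n *s v) P Q"
    unfolding GammaAdj_iff using ac pa pc by metis
qed

lemma gamma_change:
  assumes b: "is_basis2 (u::'a^2) v" and b': "is_basis2 u' v'" and l: "line u' = line u"
  shows "(chi (dt u' v') = chi (dt u v) \<longrightarrow> Gamma u' v' = Gamma u v)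
       \<and> (chi (dt u' v') \<noteq> chi (dt u v) \<longrightarrow> Gamma u' v' = complement (Gamma u v))"
proof -
  obtain lam where lam: "u' = lam *s u" using line_eqD[OF l[symmetric]] by blast
  obtain m n where mn: "v' = m *s u + n *s v" using basis_rep[OF b] by blast
  have "u' = lam *s u + 0 *s v" using lam by (simp add: vec2_eq)
  then have dtt: "dt u' v' = (lam * n) * dt u v" using mn dt_comb[of lam u 0 v m n] by simp
  have d': "dt u' v' \<noteq> 0" using b' basis_iff by blast
  have ln: "lam \<noteq> 0" "n \<noteq> 0" using dtt d' by auto
  have cd: "chi (dt u' v') = chi (lam * n) * chi (dt u v)" using dtt chi_mult[OF q] by simp
  have dnz: "dt u v \<noteq> 0" using b basis_iff by blast
  have cdv: "chi (dt u v) = 1 \<or> chi (dt u v) = -1" by (rule chi_vals[OF dnz])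
  have X: "Xu u' = Xu u" using l by (simp add: Xu_def)
  have GA: "GammaAdj u' v' P Q \<longleftrightarrow> (\<exists>a c. P = pt u v a \<and> Q = pt u v c \<and> chi (a - c) * chi (lam * n) = 1)" for P Q
    unfolding lam mn by (rule GammaAdj_change[OF b ln])
  show ?thesis
  proof (intro conjI impI)
    assume "chi (dt u' v') = chi (dt u v)"
    then have c1: "chi (lam * n) = 1" using cd cdv by auto
    have "GammaAdj u' v' = GammaAdj u v"
    proof (intro ext)
      fix P Q show "GammaAdj u' v' P Q = GammaAdj u v P Q" unfolding GA[of P Q] c1 GammaAdj_iff[of u v] by simp
    qed
    then show "Gamma u' v' = Gamma u v" by (simp add: Gamma_def X)
  next
    assume "chi (dt u' v') \<noteq> chi (dt u v)"
    then have c1: "chi (lam * n) = -1" using cd cdv chi_vals[of "lam * n"] ln by auto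
    have "GammaAdj u' v' P Q = snd (complement (Gamma u v)) P Q" for P Q
    proof -
      have "snd (complement (Gamma u v)) P Q \<longleftrightarrow> P \<in> Xu u \<and> Q \<in> Xu u \<and> P \<noteq> Q \<and> \<not> adj (Gamma u v) P Q"
        by (simp add: complement_def Gamma_def)
      also have "\<dots> \<longleftrightarrow> (\<exists>a c. P = pt u v a \<and> Q = pt u v c \<and> chi (a - c) = -1)"
      proof
        assume h: "P \<in> Xu u \<and> Q \<in> Xu u \<and> P \<noteq> Q \<and> \<not> adj (Gamma u v) P Q"
        then obtain a c where ac: "P = pt u v a" "Q = pt u v c" using Xu_eq[OF b] by auto
        then have "a \<noteq> c" "chi (a - c) \<noteq> 1" using h adj_Gamma_pt[OF b] by auto
        then have "chi (a - c) = -1" using chi_vals[of "a - c"] by auto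
        then show "\<exists>a c. P = pt u v a \<and> Q = pt u v c \<and> chi (a - c) = -1" using ac by blast
      next
        assume "\<exists>a c. P = pt u v a \<and> Q = pt u v c \<and> chi (a - c) = -1"
        then obtain a c where ac: "P = pt u v a" "Q = pt u v c" "chi (a - c) = -1" by blast
        have "a \<noteq> c" using ac(3) by auto
        then have "P \<noteq> Q" using ac pt_inj[OF b] by blast
        then show "P \<in> Xu u \<and> Q \<in> Xu u \<and> P \<noteq> Q \<and> \<not> adj (Gamma u v) P Q"
          using ac adj_Gamma_pt[OF b] Xu_eq[OF b] by auto
      qed
      finally show ?thesis using GA c1 by simp
    qed
    then have "GammaAdj u' v' = snd (complement (Gamma u v))" by (intro ext) simp
    moreover have "fst (complement (Gamma u v)) = Xu u" by (simp add: complement_def Gamma_def)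
    ultimately show "Gamma u' v' = complement (Gamma u v)"
      by (metis Gamma_def X prod.collapse)
  qed
qed

end
lemma cr2: fixes u1 :: "'a::field"
  assumes "u1 * v2 - u2 * v1 \<noteq> 0"
  shows "((xi * v2 - yi * u2)/(u1 * v2 - u2 * v1)) * u1 + ((u1 * yi - v1 * xi)/(u1 * v2 - u2 * v1)) * u2 = xi"
    and "((xi * v2 - yi * u2)/(u1 * v2 - u2 * v1)) * v1 + ((u1 * yi - v1 * xi)/(u1 * v2 - u2 * v1)) * v2 = yi"
proof -
  have "((xi * v2 - yi * u2)/(u1 * v2 - u2 * v1)) * u1 + ((u1 * yi - v1 * xi)/(u1 * v2 - u2 * v1)) * u2 = ((xi * v2 - yi * u2) * u1 + (u1 * yi - v1 * xi) * u2) / (u1 * v2 - u2 * v1)"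
    by (simp add: add_divide_distrib)
  also have "(xi * v2 - yi * u2) * u1 + (u1 * yi - v1 * xi) * u2 = xi * (u1 * v2 - u2 * v1)" by (simp add: algebra_simps)
  finally show "((xi * v2 - yi * u2)/(u1 * v2 - u2 * v1)) * u1 + ((u1 * yi - v1 * xi)/(u1 * v2 - u2 * v1)) * u2 = xi" using assms by simp
  have "((xi * v2 - yi * u2)/(u1 * v2 - u2 * v1)) * v1 + ((u1 * yi - v1 * xi)/(u1 * v2 - u2 * v1)) * v2 = ((xi * v2 - yi * u2) * v1 + (u1 * yi - v1 * xi) * v2) / (u1 * v2 - u2 * v1)"
    by (simp add: add_divide_distrib)
  also have "(xi * v2 - yi * u2) * v1 + (u1 * yi - v1 * xi) * v2 = yi * (u1 * v2 - u2 * v1)" by (simp add: algebra_simps)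
  finally show "((xi * v2 - yi * u2)/(u1 * v2 - u2 * v1)) * v1 + ((u1 * yi - v1 * xi)/(u1 * v2 - u2 * v1)) * v2 = yi" using assms by simp
qed

lemma mat_exists:
  assumes b: "is_basis2 (u::'a::field^2) v"
  shows "\<exists>A::'a^2^2. A *v u = x \<and> A *v v = y"
proof -
  have d: "u$1 * v$2 - u$2 * v$1 \<noteq> 0" using b basis_iff dt_def by metis
  define D where "D = u$1 * v$2 - u$2 * v$1"
  define A :: "'a^2^2" where "A = vector [vector [(x$1 * v$2 - y$1 * u$2)/D, (u$1 * y$1 - v$1 * x$1)/D],
                                  vector [(x$2 * v$2 - y$2 * u$2)/D, (u$1 * y$2 - v$1 * x$2)/D]]"
  have "A *v u = x" unfolding vec2_eq mv_comp A_def D_def using cr2(1)[OF d] by simp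
  moreover have "A *v v = y" unfolding vec2_eq mv_comp A_def D_def using cr2(2)[OF d] by simp
  ultimately show ?thesis by blast
qed

lemma Xu_eq_line: "is_basis2 (u::'a::field^2) v \<Longrightarrow> is_basis2 u' v' \<Longrightarrow> Xu u' = Xu u \<Longrightarrow> line u' = line u"
  unfolding Xu_def using line_u_projline by blast

definition Orb :: "int \<Rightarrow> ('a::field^2) set graph set" where
  "Orb e = {Gamma u' v' | u' v'. is_basis2 u' v' \<and> chi (dt u' v') = e}"

context
  fixes t :: nat
  assumes q: "CARD('a::{field,finite}) = 4 * t + 5"
begin

lemma det_sq: "(d::'a) \<noteq> 0 \<Longrightarrow> (\<exists>c. d = c ^ 2) \<longleftrightarrow> chi d = 1"
  unfolding chi_sq sq_mem by auto

lemma part3b: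
  fixes \<phi> :: "'a^2^2"
  assumes b: "is_basis2 (u::'a^2) v" and phi: "\<phi> \<in> GL2" and l: "proj_act \<phi> (line u) = line u"
  shows "if \<exists>c. det \<phi> = c ^ 2 then Gamma (\<phi> *v u) (\<phi> *v v) = Gamma u v
         else Gamma (\<phi> *v u) (\<phi> *v v) = complement (Gamma u v)"
proof -
  have d: "det \<phi> \<noteq> 0" using phi by (simp add: GL2_def invertible_det_nz)
  have b': "is_basis2 (\<phi> *v u) (\<phi> *v v)" by (rule basis_mat[OF b d])
  have l': "line (\<phi> *v u) = line u" using l by (simp add: proj_act_line)
  note gc = gamma_change[OF q b b' l']
  have cd: "chi (dt (\<phi> *v u) (\<phi> *v v)) = chi (det \<phi>) * chi (dt u v)" by (simp add: dt_mat chi_mult[OF q])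
  have dnz: "dt u v \<noteq> 0" using b basis_iff by blast
  have cdv: "chi (dt u v) = 1 \<or> chi (dt u v) = -1" by (rule chi_vals[OF dnz])
  have "chi (dt (\<phi> *v u) (\<phi> *v v)) = chi (dt u v) \<longleftrightarrow> chi (det \<phi>) = 1" using cd cdv by auto
  then show ?thesis using gc det_sq[OF d] by auto
qed


lemma orbit_eq:
  assumes b: "is_basis2 (u::'a^2) v"
  shows "SL2_orbit (Gamma u v) = Orb (chi (dt u v))"
proof (rule set_eqI, rule iffI)
  fix G :: "('a^2) set graph" assume "G \<in> SL2_orbit (Gamma u v)"
  then obtain \<phi> where \<phi>: "G = graph_image (proj_act \<phi>) (Gamma u v)" "det \<phi> = 1"
    unfolding SL2_orbit_def SL2_def by blast
  have inv: "invertible \<phi>" using \<phi>(2) by (simp add: invertible_det_nz)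
  have "G = Gamma (\<phi> *v u) (\<phi> *v v)" using part3a[OF q b inv] \<phi>(1) by simp
  moreover have "is_basis2 (\<phi> *v u) (\<phi> *v v)" using basis_mat[OF b] \<phi>(2) by simp
  moreover have "dt (\<phi> *v u) (\<phi> *v v) = dt u v" using \<phi>(2) by (simp add: dt_mat)
  ultimately show "G \<in> Orb (chi (dt u v))" unfolding Orb_def by (metis (mono_tags, lifting) mem_Collect_eq)
next
  fix G :: "('a^2) set graph" assume "G \<in> Orb (chi (dt u v))"
  then obtain u' v' where G: "G = Gamma u' v'" "is_basis2 u' v'" "chi (dt u' v') = chi (dt u v)"
    unfolding Orb_def by blast
  have dnz: "dt u v \<noteq> 0" using b basis_iff by blast
  have dnz': "dt u' v' \<noteq> 0" using G(2) basis_iff by blast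
  define c where "c = dt u v / dt u' v'"
  have cnz: "c \<noteq> 0" using dnz dnz' by (simp add: c_def)
  have chic: "chi c = 1"
  proof -
    have "chi c = chi (dt u v) * chi (dt u' v')" by (simp add: c_def chi_divide[OF q])
    then show ?thesis using G(3) chi_vals[OF dnz] by auto
  qed
  define w where "w = c *s v'"
  have dtw: "dt u' w = dt u v"
  proof -
    have "dt u' w = c * dt u' v'" by (simp add: w_def dt_def algebra_simps)
    then show ?thesis using dnz' by (simp add: c_def)
  qed
  have bw: "is_basis2 u' w" using dtw dnz basis_iff by metis
  have Gw: "Gamma u' w = Gamma u' v'"
    using gamma_change[OF q G(2) bw refl] dtw G(3) by simp
  obtain A :: "'a^2^2" where A: "A *v u = u'" "A *v v = w" using mat_exists[OF b] by blast
  have "det A * dt u v = dt u v" using dt_mat[of A u v] A dtw by simp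
  then have detA: "det A = 1" using dnz by simp
  have "graph_image (proj_act A) (Gamma u v) = Gamma u' w"
    using part3a[OF q b] detA A by (simp add: invertible_det_nz)
  then have "G = graph_image (proj_act A) (Gamma u v) \<and> A \<in> SL2" using G(1) Gw detA by (simp add: SL2_def)
  then show "G \<in> SL2_orbit (Gamma u v)"
    unfolding SL2_orbit_def by blast
qed

end
context
  fixes t :: nat
  assumes q: "CARD('a::{field,finite}) = 4 * t + 5"
begin

lemma D1:
  assumes b: "is_basis2 (u::'a^2) v"
  shows "delete_vertex (localize (Gamma_hat u v) (line u)) (line u) = Gamma u v"
proof -
  let ?L = "localize (Gamma_hat u v) (line u)"
  let ?E = "adj (Gamma_hat u v)"
  have zin: "line u \<in> fst (Gamma_hat u v)" using line_u_projline[OF b] by (simp add: Gamma_hat_def)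
  have LA: "adj ?L x y \<longleftrightarrow> x \<in> projline \<and> y \<in> projline \<and> x \<noteq> y \<and> eps ?E x (line u) * eps ?E y (line u) * eps ?E x y = -1" for x y
    using localize_adj[OF zin hat_sym[OF q b]] by (simp add: Gamma_hat_def)
  have fL: "fst ?L = projline" by (simp add: localize_def Gamma_hat_def)
  have W: "projline - {line u} = Xu u" by (simp add: Xu_def)
  have key: "(x \<in> Xu u \<and> y \<in> Xu u \<and> adj ?L x y) = GammaAdj u v x y" for x y
  proof
    assume h: "x \<in> Xu u \<and> y \<in> Xu u \<and> adj ?L x y"
    then have "x \<noteq> y" "eps ?E x y = -1" "x \<in> projline"
      using LA eps_hat_u2[OF q b] by (auto simp: Xu_def)
    then have "?E x y" using eps_m1 by metis
    then show "GammaAdj u v x y" using adj_hat[OF q b] by simp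
  next
    assume h: "GammaAdj u v x y"
    then obtain a c where ac: "x = pt u v a" "y = pt u v c" "chi (a - c) = 1" unfolding GammaAdj_iff by blast
    have "a \<noteq> c" using ac(3) by auto
    then have ne: "x \<noteq> y" using ac pt_inj[OF b] by blast
    have "?E x y" using h adj_hat[OF q b] by simp
    then have "eps ?E x y = -1" using ne eps_m1 by metis
    then show "x \<in> Xu u \<and> y \<in> Xu u \<and> adj ?L x y"
      using LA eps_hat_u2[OF q b] ne ac Xu_eq[OF b] projline_pt[OF b] by auto
  qed
  show ?thesis unfolding delete_vertex_def induced_def fL W Gamma_def
    using key by (simp add: fun_eq_iff)
qed

lemma hat_shift:
  assumes b: "is_basis2 (u::'a^2) v"
  shows "Gamma_hat u (a *s u + v) = Gamma_hat u v"
proof -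
  have dt: "dt u (a *s u + v) = dt u v" by (simp add: dt_def algebra_simps)
  have b2: "is_basis2 u (a *s u + v)" using b dt basis_iff by metis
  have "Gamma u (a *s u + v) = Gamma u v" using gamma_change[OF q b b2 refl] dt by simp
  then have "GammaAdj u (a *s u + v) = GammaAdj u v" by (simp add: Gamma_def)
  then show ?thesis by (simp add: Gamma_hat_def)
qed

lemma D2:
  assumes b: "is_basis2 (u::'a^2) v"
  shows "delete_vertex (localize (Gamma_hat u v) (pt u v a)) (pt u v a) = Gamma (a *s u + v) u"
proof -
  have dt: "dt u (a *s u + v) = dt u v" by (simp add: dt_def algebra_simps)
  have b2: "is_basis2 u (a *s u + v)" using b dt basis_iff by metis
  have fL: "fst (localize (Gamma_hat u v) (pt u v a)) = projline" by (simp add: localize_def Gamma_hat_def)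
  have "induced (localize (Gamma_hat u (a *s u + v)) (line (a *s u + v))) (projline - {line (a *s u + v)}) = Gamma (a *s u + v) u"
    using part2[OF q b2] by blast
  then show ?thesis unfolding delete_vertex_def fL hat_shift[OF b] by (simp add: pt_def)
qed

lemma part4b:
  assumes b: "is_basis2 (u::'a^2) v"
  shows "SL2_orbit (Gamma u v) = {delete_vertex (localize (Gamma_hat u v) z) z | z. z \<in> projline}"
proof -
  have dnz: "dt u v \<noteq> 0" using b basis_iff by blast
  have "Orb (chi (dt u v)) = {delete_vertex (localize (Gamma_hat u v) z) z | z. z \<in> projline}"
  proof (rule set_eqI, rule iffI)
    fix G :: "('a^2) set graph" assume "G \<in> Orb (chi (dt u v))"
    then obtain u' v' where G: "G = Gamma u' v'" "is_basis2 u' v'" "chi (dt u' v') = chi (dt u v)"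
      unfolding Orb_def by blast
    have "line u' \<in> projline" by (rule line_u_projline[OF G(2)])
    then have "line u' = line u \<or> (\<exists>a. line u' = pt u v a)" using projline_eq[OF b] by auto
    then show "G \<in> {delete_vertex (localize (Gamma_hat u v) z) z | z. z \<in> projline}"
    proof
      assume l: "line u' = line u"
      have "G = Gamma u v" using gamma_change[OF q b G(2) l] G by simp
      then have "G = delete_vertex (localize (Gamma_hat u v) (line u)) (line u)" using D1[OF b] by simp
      then show ?thesis using line_u_projline[OF b] by blast
    next
      assume "\<exists>a. line u' = pt u v a"
      then obtain a where l: "line u' = pt u v a" by blast
      have dt: "dt u (a *s u + v) = dt u v" by (simp add: dt_def algebra_simps)
      have b2: "is_basis2 u (a *s u + v)" using b dt basis_iff by metis
      have b3: "is_basis2 (a *s u + v) u" by (rule basis_swap[OF b2])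
      have dt3: "dt (a *s u + v) u = - dt u v" using dt dt_swap by metis
      have l3: "line u' = line (a *s u + v)" using l by (simp add: pt_def)
      have "chi (dt u' v') = chi (dt (a *s u + v) u)" using G(3) dt3 chi_neg[OF q] by simp
      then have "G = Gamma (a *s u + v) u" using gamma_change[OF q b3 G(2) l3] G(1) by simp
      then have "G = delete_vertex (localize (Gamma_hat u v) (pt u v a)) (pt u v a)" using D2[OF b] by simp
      then show ?thesis using projline_pt[OF b] by blast
    qed
  next
    fix G :: "('a^2) set graph" assume "G \<in> {delete_vertex (localize (Gamma_hat u v) z) z | z. z \<in> projline}"
    then obtain z where z: "G = delete_vertex (localize (Gamma_hat u v) z) z" "z \<in> projline" by blast
    then have "z = line u \<or> (\<exists>a. z = pt u v a)" using projline_eq[OF b] by auto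
    then show "G \<in> Orb (chi (dt u v))"
    proof
      assume "z = line u"
      then have "G = Gamma u v" using z D1[OF b] by simp
      then show ?thesis unfolding Orb_def using b by blast
    next
      assume "\<exists>a. z = pt u v a"
      then obtain a where a: "z = pt u v a" by blast
      have dt: "dt u (a *s u + v) = dt u v" by (simp add: dt_def algebra_simps)
      have b2: "is_basis2 u (a *s u + v)" using b dt basis_iff by metis
      have b3: "is_basis2 (a *s u + v) u" by (rule basis_swap[OF b2])
      have dt3: "dt (a *s u + v) u = - dt u v" using dt dt_swap by metis
      have c3: "chi (dt (a *s u + v) u) = chi (dt u v)" using dt3 chi_neg[OF q] by simp
      have "G = Gamma (a *s u + v) u" using z a D2[OF b] by simp
      then show ?thesis unfolding Orb_def using b3 c3 by blast
    qed
  qed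
  then show ?thesis using orbit_eq[OF q b] by simp
qed

lemma part4a:
  "card {SL2_orbit G | G. G \<in> {Gamma u' v' | u' v' :: 'a ^ 2. is_basis2 u' v'}} = 2"
proof -
  define e1 :: "'a^2" where "e1 = vector [1, 0]"
  define e2 :: "'a^2" where "e2 = vector [0, 1]"
  have de: "dt e1 e2 = 1" by (simp add: e1_def e2_def dt_def)
  have be: "is_basis2 e1 e2" by (simp add: basis_iff de)
  have "card {z::'a. chi z = -1} \<noteq> 0" using card_chim1[OF q] by simp
  then obtain n :: 'a where n: "chi n = -1" by fastforce
  have n0: "n \<noteq> 0" using n by auto
  have dn: "dt e1 (n *s e2) = n" by (simp add: e1_def e2_def dt_def)
  have bn: "is_basis2 e1 (n *s e2)" by (simp add: basis_iff dn n0)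
  have S: "{SL2_orbit G | G. G \<in> {Gamma u' v' | u' v' :: 'a ^ 2. is_basis2 u' v'}} = {Orb 1, Orb (-1)}"
  proof (rule set_eqI, rule iffI)
    fix Ob :: "('a^2) set graph set" assume A: "Ob \<in> {SL2_orbit G | G. G \<in> {Gamma u' v' | u' v' :: 'a ^ 2. is_basis2 u' v'}}"
    then obtain G where G: "Ob = SL2_orbit G" "G \<in> {Gamma u' v' | u' v' :: 'a ^ 2. is_basis2 u' v'}" by blast
    from G(2) obtain u' v' :: "'a^2" where uv: "G = Gamma u' v'" "is_basis2 u' v'" by blast
    have "dt u' v' \<noteq> 0" using uv(2) basis_iff by blast
    then have cv: "chi (dt u' v') = 1 \<or> chi (dt u' v') = -1" by (rule chi_vals)
    have "Ob = Orb (chi (dt u' v'))" using orbit_eq[OF q uv(2)] G(1) uv(1) by simp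
    then show "Ob \<in> {Orb 1, Orb (-1)}" using cv by (elim disjE) simp_all
  next
    fix Ob :: "('a^2) set graph set" assume "Ob \<in> {Orb 1, Orb (-1)}"
    moreover have "SL2_orbit (Gamma e1 e2) = Orb 1" using orbit_eq[OF q be] de by simp
    moreover have "SL2_orbit (Gamma e1 (n *s e2)) = Orb (-1)" using orbit_eq[OF q bn] dn n by simp
    ultimately have "Ob = SL2_orbit (Gamma e1 e2) \<or> Ob = SL2_orbit (Gamma e1 (n *s e2))" by auto
    moreover have "Gamma e1 e2 \<in> {Gamma u' v' | u' v' :: 'a ^ 2. is_basis2 u' v'}" using be by blast
    moreover have "Gamma e1 (n *s e2) \<in> {Gamma u' v' | u' v' :: 'a ^ 2. is_basis2 u' v'}" using bn by blast
    ultimately show "Ob \<in> {SL2_orbit G | G. G \<in> {Gamma u' v' | u' v' :: 'a ^ 2. is_basis2 u' v'}}"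
      by blast
  qed
  have ne: "Orb 1 \<noteq> (Orb (-1) :: ('a^2) set graph set)"
  proof
    assume h: "Orb 1 = (Orb (-1) :: ('a^2) set graph set)"
    have "Gamma e1 e2 = Gamma e1 e2 \<and> is_basis2 e1 e2 \<and> chi (dt e1 e2) = 1" using be de by simp
    then have "Gamma e1 e2 \<in> Orb 1" unfolding Orb_def by blast
    then have "Gamma e1 e2 \<in> Orb (-1)" using h by simp
    then obtain u' v' :: "'a^2" where G: "Gamma e1 e2 = Gamma u' v'" "is_basis2 u' v'" "chi (dt u' v') = -1"
      unfolding Orb_def by blast
    have "Xu u' = Xu e1" using G(1) by (simp add: Gamma_def)
    then have l: "line u' = line e1" by (rule Xu_eq_line[OF be G(2)])
    have "Gamma u' v' = complement (Gamma e1 e2)" using gamma_change[OF q be G(2) l] G(3) de by simp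
    then have eq: "Gamma e1 e2 = complement (Gamma e1 e2)" using G(1) by simp
    let ?x = "pt e1 e2 1" and ?y = "pt e1 e2 0"
    have a: "adj (Gamma e1 e2) ?x ?y" using adj_Gamma_pt[OF be] by simp
    then have "snd (Gamma e1 e2) ?x ?y" by (simp add: adj_def)
    moreover have "\<not> snd (complement (Gamma e1 e2)) ?x ?y" using a by (simp add: complement_def)
    moreover have "snd (Gamma e1 e2) = snd (complement (Gamma e1 e2))" using eq by simp
    ultimately show False by simp
  qed
  show ?thesis unfolding S using ne by simp
qed

end

theorem theorem4:
  fixes t :: nat and u v :: "'a::{field,finite} ^ 2"
  assumes q: "CARD('a) = 4 * t + 5"
    and uv: "is_basis2 u v"
  shows
    "(diameter (Gamma u v) = 2
      \<and> (\<forall>x\<in>Xu u. card (nbrs (Gamma u v) x) = (CARD('a) - 1) div 2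
                   \<and> card (nbrs (Gamma u v) x) = 2 * (t + 1))
      \<and> (\<forall>x\<in>Xu u. \<forall>y\<in>Xu u. adj (Gamma u v) x y
             \<longrightarrow> card (common_nbrs (Gamma u v) x y) = t)
      \<and> (\<forall>x\<in>Xu u. \<forall>y\<in>Xu u. graph_dist (Gamma u v) x y = 2
             \<longrightarrow> card (common_nbrs (Gamma u v) x y) = t + 1))
   \<and> ((\<forall>y. \<not> adj (localize (Gamma_hat u v) (line v)) (line v) y)
      \<and> induced (localize (Gamma_hat u v) (line v)) (projline - {line v}) = Gamma v u)
   \<and> (\<forall>\<phi>\<in>GL2. graph_image (proj_act \<phi>) (Gamma u v) = Gamma (\<phi> *v u) (\<phi> *v v))
   \<and> (\<forall>\<phi>\<in>GL2. proj_act \<phi> (line u) = line u \<longrightarrow>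
        (if \<exists>c. det \<phi> = c ^ 2 then Gamma (\<phi> *v u) (\<phi> *v v) = Gamma u v
         else Gamma (\<phi> *v u) (\<phi> *v v) = complement (Gamma u v)))
   \<and> (card {SL2_orbit G | G. G \<in> {Gamma u' v' | u' v' :: 'a ^ 2. is_basis2 u' v'}} = 2
      \<and> SL2_orbit (Gamma u v) =
          {delete_vertex (localize (Gamma_hat u v) z) z | z. z \<in> projline})"
proof -
  have p1: "diameter (Gamma u v) = 2
      \<and> (\<forall>x\<in>Xu u. card (nbrs (Gamma u v) x) = (CARD('a) - 1) div 2
                   \<and> card (nbrs (Gamma u v) x) = 2 * (t + 1))
      \<and> (\<forall>x\<in>Xu u. \<forall>y\<in>Xu u. adj (Gamma u v) x y
             \<longrightarrow> card (common_nbrs (Gamma u v) x y) = t)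
      \<and> (\<forall>x\<in>Xu u. \<forall>y\<in>Xu u. graph_dist (Gamma u v) x y = 2
             \<longrightarrow> card (common_nbrs (Gamma u v) x y) = t + 1)"
    by (rule part1[OF q uv])
  have p2: "(\<forall>y. \<not> adj (localize (Gamma_hat u v) (line v)) (line v) y)
      \<and> induced (localize (Gamma_hat u v) (line v)) (projline - {line v}) = Gamma v u"
    by (rule part2[OF q uv])
  have p3a: "\<forall>\<phi>\<in>GL2. graph_image (proj_act \<phi>) (Gamma u v) = Gamma (\<phi> *v u) (\<phi> *v v)"
  proof
    fix \<phi> :: "'a^2^2" assume "\<phi> \<in> GL2"
    then have "invertible \<phi>" by (simp add: GL2_def)
    then show "graph_image (proj_act \<phi>) (Gamma u v) = Gamma (\<phi> *v u) (\<phi> *v v)"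
      by (rule part3a[OF q uv])
  qed
  have p3b: "\<forall>\<phi>\<in>GL2. proj_act \<phi> (line u) = line u \<longrightarrow>
        (if \<exists>c. det \<phi> = c ^ 2 then Gamma (\<phi> *v u) (\<phi> *v v) = Gamma u v
         else Gamma (\<phi> *v u) (\<phi> *v v) = complement (Gamma u v))"
  proof (intro ballI impI)
    fix \<phi> :: "'a^2^2" assume "\<phi> \<in> GL2" "proj_act \<phi> (line u) = line u"
    then show "if \<exists>c. det \<phi> = c ^ 2 then Gamma (\<phi> *v u) (\<phi> *v v) = Gamma u v
         else Gamma (\<phi> *v u) (\<phi> *v v) = complement (Gamma u v)"
      by (rule part3b[OF q uv])
  qed
  have p4: "card {SL2_orbit G | G. G \<in> {Gamma u' v' | u' v' :: 'a ^ 2. is_basis2 u' v'}} = 2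
      \<and> SL2_orbit (Gamma u v) =
          {delete_vertex (localize (Gamma_hat u v) z) z | z. z \<in> projline}"
    using part4a[OF q] part4b[OF q uv] by (rule conjI)
  show ?thesis by (rule conjI[OF p1 conjI[OF p2 conjI[OF p3a conjI[OF p3b p4]]]])
qed

end
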